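(* For every positive constant $\varepsilon$, there is a deterministic Congested Clique algorithm which, on an input graph $G$ with arboricity $a\ge 2$, partitions the edge set of $G$ into $O(a^{1+\varepsilon})$ forests, each vertex knowing the label and orientation (towards its parent) of each incident edge, with each vertex having at most one parent in each forest, within $O(1)$ rounds.
   Context: Congested Clique model: there are $n$ processors (vertices) with distinct IDs of $O(\log n)$ bits; computation proceeds in synchronous rounds; in each round every pair of vertices may exchange a message of $O(\log n)$ bits; local computation is free. The input is a graph $G=(V,E')$ on the same vertex set; each vertex initially knows its incident edges in $G$, and $a$ is known to all vertices. The arboricity of a graph is the minimum number of forests whose union covers its edge set. *)

theory Defs
  imports Complex_Main
begin

text \<open>Vertices are their (natural-number) IDs. A simple undirected graph on vertex
set V is given by a set E of two-element subsets of V.\<close>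

definition simple_graph :: "nat set \<Rightarrow> nat set set \<Rightarrow> bool" where
  "simple_graph V E \<longleftrightarrow> finite V \<and> (\<forall>e\<in>E. \<exists>u v. e = {u, v} \<and> u \<in> V \<and> v \<in> V \<and> u \<noteq> v)"

definition is_cycle :: "nat set set \<Rightarrow> nat list \<Rightarrow> bool" where
  "is_cycle F vs \<longleftrightarrow> length vs \<ge> 3 \<and> distinct vs \<and>
     (\<forall>i < length vs. {vs ! i, vs ! ((i + 1) mod length vs)} \<in> F)"

definition forest :: "nat set set \<Rightarrow> bool" where
  "forest F \<longleftrightarrow> \<not> (\<exists>vs. is_cycle F vs)"

definition arboricity :: "nat set set \<Rightarrow> nat" where
  "arboricity E = (LEAST k. \<exists>Fs :: nat set set list.
      length Fs = k \<and> (\<forall>F\<in>set Fs. forest F) \<and> E \<subseteq> \<Union>(set Fs))"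

text \<open>Local input of a vertex: (n, a, own ID, set of all IDs, set of neighbour IDs).
Local computation is free, so w.l.o.g. the local state of a vertex is its input
together with the history of received messages. An algorithm is given by
a message function (input, history, recipient ID) \<Rightarrow> message, and an output function.
Messages are natural numbers; the value 0 is used for "no message".\<close>

type_synonym local_input = "nat \<times> nat \<times> nat \<times> nat set \<times> nat set"
type_synonym history = "(nat \<Rightarrow> nat) list"
type_synonym msg_fun = "local_input \<Rightarrow> history \<Rightarrow> nat \<Rightarrow> nat"
type_synonym out_fun = "local_input \<Rightarrow> history \<Rightarrow> nat \<Rightarrow> nat \<times> bool"

definition local_inp :: "nat set \<Rightarrow> nat set set \<Rightarrow> nat \<Rightarrow> nat \<Rightarrow> local_input" where
  "local_inp V E a v = (card V, a, v, V, {u. {v, u} \<in> E})"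

text \<open>hist msg I V r v: the messages received by v in rounds 1..r; entry j maps a
sender ID to the message it sent to v in round j+1.\<close>
primrec hist :: "msg_fun \<Rightarrow> (nat \<Rightarrow> local_input) \<Rightarrow> nat set \<Rightarrow> nat \<Rightarrow> nat \<Rightarrow> history" where
  "hist msg I V 0 = (\<lambda>v. [])"
| "hist msg I V (Suc r) = (\<lambda>v. hist msg I V r v @
      [\<lambda>u. if u \<in> V \<and> u \<noteq> v then msg (I u) (hist msg I V r u) v else 0])"

text \<open>Messages in the first R rounds have O(log n) bits: each is < n^c.\<close>
definition msgs_bounded :: "msg_fun \<Rightarrow> nat set \<Rightarrow> nat set set \<Rightarrow> nat \<Rightarrow> nat \<Rightarrow> nat \<Rightarrow> bool" where
  "msgs_bounded msg V E a R c \<longleftrightarrow>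
     (\<forall>r < R. \<forall>u\<in>V. \<forall>v\<in>V. msg (local_inp V E a u) (hist msg (local_inp V E a) V r u) v < card V ^ c)"

text \<open>Correct forest-decomposition output. lab v u is the label vertex v gives to the
edge to neighbour u; par v u means that u is v's parent (edge oriented v \<rightarrow> u).\<close>
definition forest_decomposition_output ::
  "nat set \<Rightarrow> nat set set \<Rightarrow> (nat \<Rightarrow> nat \<Rightarrow> nat) \<Rightarrow> (nat \<Rightarrow> nat \<Rightarrow> bool) \<Rightarrow> real \<Rightarrow> bool" where
  "forest_decomposition_output V E lab par bound \<longleftrightarrow>
     (\<forall>u v. {u, v} \<in> E \<longrightarrow> lab u v = lab v u \<and> (par u v \<longleftrightarrow> \<not> par v u)) \<and>
     (\<forall>i. forest {e \<in> E. \<exists>u v. e = {u, v} \<and> lab u v = i}) \<and>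
     (\<forall>v\<in>V. \<forall>i u w. {v, u} \<in> E \<and> lab v u = i \<and> par v u \<and>
                      {v, w} \<in> E \<and> lab v w = i \<and> par v w \<longrightarrow> u = w) \<and>
     real (card {lab u v | u v. {u, v} \<in> E}) \<le> bound"

end

theory Submission
  imports Defs
begin

definition rnk :: "nat set \<Rightarrow> nat \<Rightarrow> nat" where "rnk A x = card {y\<in>A. y < x}"
definition elem :: "nat set \<Rightarrow> nat \<Rightarrow> nat" where "elem A i = (THE x. x \<in> A \<and> rnk A x = i)"

lemma rnk_mono: assumes "finite A" "x \<in> A" "x < y" shows "rnk A x < rnk A y"
proof -
  have a: "{z \<in> A. z < x} \<subseteq> {z \<in> A. z < y}" using assms(3) by auto
  have b: "x \<in> {z \<in> A. z < y}" using assms(2,3) by simp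
  have c: "x \<notin> {z \<in> A. z < x}" by simp
  have "{z \<in> A. z < x} \<subset> {z \<in> A. z < y}" using a b c by blast
  moreover have "finite {z \<in> A. z < y}" using assms(1) by simp
  ultimately show ?thesis unfolding rnk_def by (simp add: psubset_card_mono)
qed

lemma rnk_inj: assumes "finite A" shows "inj_on (rnk A) A"
proof (rule inj_onI)
  fix x y assume "x \<in> A" "y \<in> A" "rnk A x = rnk A y"
  then show "x = y" using rnk_mono[OF assms, of x y] rnk_mono[OF assms, of y x]
    by (cases x y rule: linorder_cases) auto
qed

lemma rnk_less: assumes "finite A" "x \<in> A" shows "rnk A x < card A"
proof -
  have "{z \<in> A. z < x} \<subset> A" using assms(2) by force
  then show ?thesis unfolding rnk_def using assms(1) by (simp add: psubset_card_mono)
qed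

lemma rnk_image: "finite A \<Longrightarrow> rnk A ` A = {..<card A}"
proof -
  assume f: "finite A"
  have s: "rnk A ` A \<subseteq> {..<card A}" using rnk_less[OF f] by auto
  have "card (rnk A ` A) = card A" using card_image[OF rnk_inj[OF f]] .
  then show ?thesis using s by (simp add: card_subset_eq)
qed

lemma elem_prop: assumes "finite A" "i < card A" shows "elem A i \<in> A \<and> rnk A (elem A i) = i"
proof -
  obtain x where x: "x \<in> A" "rnk A x = i" using rnk_image[OF assms(1)] assms(2) by (metis imageE lessThan_iff)
  have "\<exists>!x. x \<in> A \<and> rnk A x = i" using x rnk_inj[OF assms(1)] by (auto simp: inj_on_def)
  then show ?thesis unfolding elem_def by (rule theI')
qed

lemma elem_rnk: assumes "finite A" "x \<in> A" shows "elem A (rnk A x) = x"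
proof -
  have "elem A (rnk A x) \<in> A \<and> rnk A (elem A (rnk A x)) = rnk A x"
    using elem_prop[OF assms(1) rnk_less[OF assms]] .
  then show ?thesis using rnk_inj[OF assms(1)] assms(2) by (auto simp: inj_on_def)
qed

lemma hist_length: "length (hist msg I V r v) = r"
  by (induction r arbitrary: v) auto

lemma hist_nth: "j < r \<Longrightarrow> hist msg I V r v ! j = (\<lambda>u. if u \<in> V \<and> u \<noteq> v then msg (I u) (hist msg I V j u) v else 0)"
proof (induction r arbitrary: v)
  case 0 then show ?case by simp
next
  case (Suc r)
  then show ?case
    by (cases "j = r") (auto simp: nth_append hist_length)
qed

definition edges_in :: "nat set \<Rightarrow> nat set set \<Rightarrow> bool" where
  "edges_in S F \<longleftrightarrow> (\<forall>e\<in>F. \<exists>x y. e = {x, y} \<and> x \<in> S \<and> y \<in> S \<and> x \<noteq> y)"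

definition pth :: "nat set \<Rightarrow> nat set set \<Rightarrow> nat list \<Rightarrow> bool" where
  "pth S F xs \<longleftrightarrow> xs \<noteq> [] \<and> distinct xs \<and> set xs \<subseteq> S \<and> (\<forall>i. Suc i < length xs \<longrightarrow> {xs!i, xs!Suc i} \<in> F)"

lemma cycle_from_path:
  assumes p: "pth S F xs" and i: "i + 3 \<le> length xs" and e: "{last xs, xs ! i} \<in> F"
  shows "is_cycle F (drop i xs)"
proof -
  let ?vs = "drop i xs"
  have len: "length ?vs = length xs - i" by simp
  have "\<forall>j < length ?vs. {?vs ! j, ?vs ! ((j + 1) mod length ?vs)} \<in> F"
  proof (intro allI impI)
    fix j assume j: "j < length ?vs"
    show "{?vs ! j, ?vs ! ((j + 1) mod length ?vs)} \<in> F"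
    proof (cases "j + 1 < length ?vs")
      case True
      then have "(j + 1) mod length ?vs = j + 1" by simp
      moreover have "{xs ! (i + j), xs ! Suc (i + j)} \<in> F" using p True unfolding pth_def by auto
      ultimately show ?thesis using True j by simp
    next
      case False
      then have jj: "j + 1 = length ?vs" using j by simp
      then have "(j + 1) mod length ?vs = 0" by simp
      moreover have "?vs ! j = last xs"
      proof -
        have "i + j = length xs - 1" using jj i by simp
        then show ?thesis using i p unfolding pth_def by (simp add: last_conv_nth)
      qed
      moreover have "?vs ! 0 = xs ! i" using i by simp
      ultimately show ?thesis using e by simp
    qed
  qed
  moreover have "distinct ?vs" using p unfolding pth_def by simp
  moreover have "length ?vs \<ge> 3" using i by simp
  ultimately show ?thesis unfolding is_cycle_def by blast
qed

lemma two_nbrs: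
  assumes ed: "edges_in S F" and fin: "finite F" and d: "card {e\<in>F. z \<in> e} \<ge> 2"
  shows "\<exists>y1 y2. y1 \<noteq> y2 \<and> {z, y1} \<in> F \<and> {z, y2} \<in> F \<and> y1 \<in> S \<and> y2 \<in> S \<and> y1 \<noteq> z \<and> y2 \<noteq> z"
proof -
  have nc: "\<not> card {e\<in>F. z \<in> e} \<le> Suc 0" using d by simp
  have fin': "finite {e\<in>F. z \<in> e}" using fin by simp
  have "\<not> (\<forall>x\<in>{e\<in>F. z \<in> e}. \<forall>y\<in>{e\<in>F. z \<in> e}. x = y)"
  proof
    assume all: "\<forall>x\<in>{e\<in>F. z \<in> e}. \<forall>y\<in>{e\<in>F. z \<in> e}. x = y"
    have "card {e\<in>F. z \<in> e} \<le> Suc 0" by (subst card_le_Suc0_iff_eq[OF fin']) (rule all)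
    then show False using nc by contradiction
  qed
  then obtain e1 e2 where e: "e1 \<in> F" "e2 \<in> F" "z \<in> e1" "z \<in> e2" "e1 \<noteq> e2"
    by auto
  have g: "\<exists>y. e = {z, y} \<and> y \<in> S \<and> y \<noteq> z" if "e \<in> F" "z \<in> e" for e
  proof -
    have "\<exists>x y. e = {x, y} \<and> x \<in> S \<and> y \<in> S \<and> x \<noteq> y" using ed that(1) unfolding edges_in_def by simp
    then obtain x y where xy: "e = {x, y}" "x \<in> S" "y \<in> S" "x \<noteq> y" by (elim exE conjE)
    show ?thesis
    proof (cases "z = x")
      case True
      show ?thesis by (rule exI[of _ y]) (use xy True in auto)
    next
      case False
      then have zy: "z = y" using that(2) xy(1) by simp
      show ?thesis by (rule exI[of _ x]) (use xy zy False in \<open>auto simp add: insert_commute\<close>)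
    qed
  qed
  obtain y1 where y1: "e1 = {z, y1}" "y1 \<in> S" "y1 \<noteq> z" using g[OF e(1) e(3)] by (elim exE conjE)
  obtain y2 where y2: "e2 = {z, y2}" "y2 \<in> S" "y2 \<noteq> z" using g[OF e(2) e(4)] by (elim exE conjE)
  have f1: "{z, y1} \<in> F" using e(1) y1(1) by simp
  have f2: "{z, y2} \<in> F" using e(2) y2(1) by simp
  have "y1 \<noteq> y2" using y1(1) y2(1) e(5) by auto
  then show ?thesis using f1 f2 y1(2,3) y2(2,3) by blast
qed

lemma path_length: "pth S F xs \<Longrightarrow> finite S \<Longrightarrow> length xs \<le> card S"
proof -
  assume p: "pth S F xs" and f: "finite S"
  have "length xs = card (set xs)" using p unfolding pth_def by (simp add: distinct_card)
  also have "\<dots> \<le> card S" using p f unfolding pth_def by (simp add: card_mono)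
  finally show ?thesis .
qed

lemma forest_low_vertex:
  assumes fo: "forest F" and ed: "edges_in S F" and fS: "finite S" and ne: "S \<noteq> {}"
  shows "\<exists>x\<in>S. card {e\<in>F. x \<in> e} \<le> 1"
proof (rule ccontr)
  assume "\<not> ?thesis"
  then have all2: "\<forall>x\<in>S. card {e\<in>F. x \<in> e} \<ge> 2" by auto
  have finF: "finite F"
  proof -
    have "F \<subseteq> Pow S" using ed unfolding edges_in_def by auto
    then show ?thesis using fS by (simp add: finite_subset)
  qed
  have ex: "\<exists>xs. pth S F xs \<and> length xs = Suc n" for n
  proof (induction n)
    case 0
    obtain x where "x \<in> S" using ne by blast
    then have "pth S F [x]" unfolding pth_def by simp
    then show ?case by force
  next
    case (Suc n)
    then obtain xs where p: "pth S F xs" and l: "length xs = Suc n" by blast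
    let ?z = "last xs"
    have zS: "?z \<in> S" using p unfolding pth_def by auto
    obtain y1 y2 where y: "y1 \<noteq> y2" "{?z, y1} \<in> F" "{?z, y2} \<in> F" "y1 \<in> S" "y2 \<in> S" "y1 \<noteq> ?z" "y2 \<noteq> ?z"
      using two_nbrs[OF ed finF all2[rule_format, OF zS]] by blast
    obtain y where yy: "{?z, y} \<in> F" "y \<in> S" "y \<noteq> ?z" and yp: "n \<ge> 1 \<Longrightarrow> y \<noteq> xs ! (n - 1)"
    proof (cases "y1 = xs ! (n - 1)")
      case True
      then have "y2 \<noteq> xs ! (n - 1)" using y(1) by simp
      then show ?thesis using that[of y2] y by blast
    next
      case False
      then show ?thesis using that[of y1] y by blast
    qed
    show ?case
    proof (cases "y \<in> set xs")
      case False
      have "pth S F (xs @ [y])"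
        unfolding pth_def
      proof (intro conjI allI impI)
        show "xs @ [y] \<noteq> []" by simp
        show "distinct (xs @ [y])" using p False unfolding pth_def by simp
        show "set (xs @ [y]) \<subseteq> S" using p yy unfolding pth_def by simp
        fix i assume i: "Suc i < length (xs @ [y])"
        show "{(xs @ [y]) ! i, (xs @ [y]) ! Suc i} \<in> F"
        proof (cases "Suc i < length xs")
          case True then show ?thesis using p unfolding pth_def by (simp add: nth_append)
        next
          case False
          then have "i = n" using i l by simp
          then show ?thesis using yy l p unfolding pth_def by (simp add: nth_append last_conv_nth)
        qed
      qed
      then show ?thesis using l by (metis length_append_singleton)
    next
      case True
      then obtain i where i: "i < length xs" "xs ! i = y" by (metis in_set_conv_nth)
      have "i \<noteq> n" using yy(3) i l p unfolding pth_def by (auto simp: last_conv_nth)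
      moreover have "i \<noteq> n - 1 \<or> n = 0" using yp i by (cases n) auto
      moreover have "n \<noteq> 0" using i \<open>i \<noteq> n\<close> l by simp
      ultimately have "i + 3 \<le> length xs" using i l by auto
      then have "is_cycle F (drop i xs)" using cycle_from_path[OF p] yy i by simp
      then show ?thesis using fo unfolding forest_def by blast
    qed
  qed
  obtain xs where "pth S F xs" "length xs = Suc (card S)" using ex by blast
  then show False using path_length fS by fastforce
qed

lemma forest_card:
  assumes "forest F" "edges_in S F" "finite S"
  shows "card F \<le> card S"
  using assms
proof (induction "card S" arbitrary: S F)
  case 0
  then have "S = {}" by simp
  then have "F = {}" using 0 unfolding edges_in_def by auto
  then show ?case by simp
next
  case (Suc m)
  then have ne: "S \<noteq> {}" by auto
  obtain x where x: "x \<in> S" "card {e\<in>F. x \<in> e} \<le> 1" using forest_low_vertex[OF Suc(3,4,5) ne] by blast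
  let ?F' = "{e\<in>F. x \<notin> e}"
  have fo': "forest ?F'" using Suc(3) unfolding forest_def is_cycle_def by blast
  have ed': "edges_in (S - {x}) ?F'" using Suc(4) unfolding edges_in_def by blast
  have c': "card ?F' \<le> card (S - {x})" using Suc(1)[of "S - {x}" ?F'] Suc(2,5) x fo' ed' by simp
  have finF: "finite F"
  proof -
    have "F \<subseteq> Pow S" using Suc(4) unfolding edges_in_def by auto
    then show ?thesis using Suc(5) by (simp add: finite_subset)
  qed
  have "F = ?F' \<union> {e\<in>F. x \<in> e}" by auto
  then have "card F \<le> card ?F' + card {e\<in>F. x \<in> e}" by (metis card_Un_le)
  then show ?case using c' x Suc(2) by simp
qed

definition Nb :: "nat set set \<Rightarrow> nat \<Rightarrow> nat set" where "Nb E v = {u. {v, u} \<in> E}"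
definition DEs :: "nat set set \<Rightarrow> nat set \<Rightarrow> (nat \<times> nat) set" where
  "DEs E X = Sigma X (\<lambda>ov. Nb E ov \<inter> X)"

lemma forest_subset: "forest F \<Longrightarrow> F' \<subseteq> F \<Longrightarrow> forest F'"
  unfolding forest_def is_cycle_def by blast

lemma singleton_forest: "forest {e}"
  unfolding forest_def
proof
  assume "\<exists>vs. is_cycle {e} vs"
  then obtain vs where c: "is_cycle {e} vs" by (elim exE)
  have l: "length vs \<ge> 3" "distinct vs" using c unfolding is_cycle_def by auto
  have h: "\<forall>i<length vs. {vs ! i, vs ! ((i + 1) mod length vs)} \<in> {e}"
    using c unfolding is_cycle_def by (elim conjE)
  have l0: "0 < length vs" and l1: "1 < length vs" and l2: "2 < length vs" using l(1) by linarith+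
  have m0: "(0 + 1) mod length vs = 1" using l1 by simp
  have m1: "(1 + 1) mod length vs = 2" using l2 by simp
  have "{vs ! 0, vs ! ((0 + 1) mod length vs)} \<in> {e}" using h l0 by blast
  then have e0: "{vs ! 0, vs ! 1} = e" using m0 by simp
  have "{vs ! 1, vs ! ((1 + 1) mod length vs)} \<in> {e}" using h l1 by blast
  then have e1: "{vs ! 1, vs ! 2} = e" using m1 by simp
  have d: "vs ! 0 \<noteq> vs ! 1" "vs ! 0 \<noteq> vs ! 2" "vs ! 1 \<noteq> vs ! 2"
    using l l0 l1 l2 by (simp_all add: nth_eq_iff_index_eq)
  have "{vs ! 0, vs ! 1} = {vs ! 1, vs ! 2}" using e0 e1 by simp
  then show False using d by (simp add: doubleton_eq_iff)
qed

lemma simple_edge: assumes "simple_graph V E" "e \<in> E" shows "\<exists>x y. e = {x, y} \<and> x \<in> V \<and> y \<in> V \<and> x \<noteq> y"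
proof -
  have "\<forall>e\<in>E. \<exists>x y. e = {x, y} \<and> x \<in> V \<and> y \<in> V \<and> x \<noteq> y" using assms(1) unfolding simple_graph_def by (rule conjunct2)
  then show ?thesis using assms(2) by (rule bspec)
qed

lemma simple_finite_E: "simple_graph V E \<Longrightarrow> finite E"
proof -
  assume s: "simple_graph V E"
  have "E \<subseteq> Pow V" using s unfolding simple_graph_def by auto
  moreover have "finite V" using s unfolding simple_graph_def by simp
  ultimately show ?thesis by (simp add: finite_subset)
qed

lemma arb_witness:
  assumes s: "simple_graph V E"
  shows "\<exists>Fs. length Fs = arboricity E \<and> (\<forall>F\<in>set Fs. forest F) \<and> E \<subseteq> \<Union>(set Fs)"
proof -
  obtain xs where xs: "set xs = E" using finite_list[OF simple_finite_E[OF s]] by (elim exE)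
  let ?Fs = "map (\<lambda>e. {e}) xs"
  have "\<exists>Fs :: nat set set list. length Fs = length xs \<and> (\<forall>F\<in>set Fs. forest F) \<and> E \<subseteq> \<Union>(set Fs)"
    by (rule exI[of _ ?Fs]) (auto simp: xs[symmetric] singleton_forest)
  then have "\<exists>k. \<exists>Fs :: nat set set list. length Fs = k \<and> (\<forall>F\<in>set Fs. forest F) \<and> E \<subseteq> \<Union>(set Fs)"
    by (rule exI)
  then show ?thesis unfolding arboricity_def by (rule LeastI_ex)
qed

lemma Nb_sub: "simple_graph V E \<Longrightarrow> Nb E u \<subseteq> V"
proof
  fix w assume s: "simple_graph V E" and w: "w \<in> Nb E u"
  then have "{u, w} \<in> E" unfolding Nb_def by simp
  then have "\<exists>x y. {u, w} = {x, y} \<and> x \<in> V \<and> y \<in> V \<and> x \<noteq> y" using s unfolding simple_graph_def by blast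
  then obtain x y where "{u, w} = {x, y}" "x \<in> V" "y \<in> V" by (elim exE conjE)
  then show "w \<in> V" by (auto simp: doubleton_eq_iff)
qed

lemma Nb_irrefl: "simple_graph V E \<Longrightarrow> u \<notin> Nb E u"
proof
  assume s: "simple_graph V E" and w: "u \<in> Nb E u"
  then have "{u, u} \<in> E" unfolding Nb_def by simp
  then have "\<exists>x y. {u, u} = {x, y} \<and> x \<in> V \<and> y \<in> V \<and> x \<noteq> y" using s unfolding simple_graph_def by blast
  then obtain x y where "{u, u} = {x, y}" "x \<noteq> y" by (elim exE conjE)
  then show False by (auto simp: doubleton_eq_iff)
qed

lemma Nb_sym: "w \<in> Nb E u \<longleftrightarrow> u \<in> Nb E w"
  unfolding Nb_def by (simp add: insert_commute)

lemma Nb_finite: "simple_graph V E \<Longrightarrow> finite (Nb E u)"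
  using Nb_sub by (metis finite_subset simple_graph_def)

lemma card_pairs_le:
  assumes fo: "forest F" and s: "simple_graph V E" and X: "X \<subseteq> V"
  shows "card {(ov, w). ov < w \<and> {ov, w} \<in> F \<and> {ov, w} \<in> E \<and> ov \<in> X \<and> w \<in> X} \<le> card X"
proof -
  let ?P = "{(ov, w). ov < w \<and> {ov, w} \<in> F \<and> {ov, w} \<in> E \<and> ov \<in> X \<and> w \<in> X}"
  let ?G = "{e \<in> F. e \<in> E \<and> e \<subseteq> X}"
  have fX: "finite X" using X s unfolding simple_graph_def by (metis finite_subset)
  have inj: "inj_on (\<lambda>(ov, w). {ov, w}) ?P"
  proof (rule inj_onI)
    fix p q assume p: "p \<in> ?P" and q: "q \<in> ?P" and eq: "(\<lambda>(ov, w). {ov, w}) p = (\<lambda>(ov, w). {ov, w}) q"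
    obtain a b where ab: "p = (a, b)" by (cases p)
    obtain c d where cd: "q = (c, d)" by (cases q)
    have "a < b" "c < d" using p q ab cd by auto
    moreover have "{a, b} = {c, d}" using eq ab cd by simp
    ultimately show "p = q" using ab cd by (auto simp: doubleton_eq_iff)
  qed
  have img: "(\<lambda>(ov, w). {ov, w}) ` ?P \<subseteq> ?G" by auto
  have edG: "edges_in X ?G"
    unfolding edges_in_def
  proof
    fix e assume e: "e \<in> ?G"
    then have "\<exists>x y. e = {x, y} \<and> x \<in> V \<and> y \<in> V \<and> x \<noteq> y" using simple_edge[OF s] by simp
    then obtain x y where xy: "e = {x, y}" "x \<noteq> y" by (elim exE conjE)
    have "x \<in> X" "y \<in> X" using e xy by auto
    then show "\<exists>x y. e = {x, y} \<and> x \<in> X \<and> y \<in> X \<and> x \<noteq> y"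
      by (intro exI[of _ x] exI[of _ y]) (use xy in simp)
  qed
  have foG: "forest ?G" by (rule forest_subset[OF fo]) auto
  have cG: "card ?G \<le> card X" using forest_card[OF foG edG fX] .
  have finG: "finite ?G"
  proof -
    have "?G \<subseteq> Pow X" by auto
    then show ?thesis using fX by (simp add: finite_subset)
  qed
  have "card ?P = card ((\<lambda>(ov, w). {ov, w}) ` ?P)" using card_image[OF inj] by simp
  also have "\<dots> \<le> card ?G" using card_mono[OF finG img] .
  finally show ?thesis using cG by simp
qed

lemma DEs_bound:
  assumes s: "simple_graph V E" and X: "X \<subseteq> V"
    and Fs: "length Fs = a" "\<forall>F\<in>set Fs. forest F" "E \<subseteq> \<Union>(set Fs)"
  shows "card (DEs E X) \<le> 2 * a * card X"
proof -
  define P1 where "P1 F = {(ov, w). ov < w \<and> {ov, w} \<in> F \<and> {ov, w} \<in> E \<and> ov \<in> X \<and> w \<in> X}" for F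
  define P2 where "P2 F = {(ov, w). w < ov \<and> {w, ov} \<in> F \<and> {w, ov} \<in> E \<and> w \<in> X \<and> ov \<in> X}" for F
  have c1: "card (P1 F) \<le> card X" if "F \<in> set Fs" for F
    unfolding P1_def using card_pairs_le[OF _ s X] Fs(2) that by blast
  have c2: "card (P2 F) \<le> card X" if "F \<in> set Fs" for F
  proof -
    have e: "P2 F = (\<lambda>(ov, w). (w, ov)) ` P1 F" unfolding P1_def P2_def by force
    have "inj_on (\<lambda>(ov, w). (w, ov)) (P1 F)" by (rule inj_onI) auto
    then have "card (P2 F) = card (P1 F)" using e card_image by metis
    then show ?thesis using c1[OF that] by simp
  qed
  have fX: "finite X" using X s unfolding simple_graph_def by (metis finite_subset)
  have sub: "DEs E X \<subseteq> (\<Union>F\<in>set Fs. P1 F \<union> P2 F)"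
  proof
    fix p assume p: "p \<in> DEs E X"
    obtain ov w where ow: "p = (ov, w)" by (cases p)
    have ov: "ov \<in> X" and w: "w \<in> X" and ow2: "{ov, w} \<in> E" using p ow unfolding DEs_def Nb_def by auto
    have ne: "ov \<noteq> w" using Nb_irrefl[OF s, of ov] p ow unfolding DEs_def by auto
    obtain F where F: "F \<in> set Fs" "{ov, w} \<in> F" using Fs(3) ow2 by blast
    show "p \<in> (\<Union>F\<in>set Fs. P1 F \<union> P2 F)"
    proof (cases "ov < w")
      case True
      then have "p \<in> P1 F" unfolding P1_def using ow ov w ow2 F by simp
      then show ?thesis using F by blast
    next
      case False
      then have "w < ov" using ne by simp
      moreover have "{w, ov} = {ov, w}" by (simp add: insert_commute)
      ultimately have "p \<in> P2 F" unfolding P2_def using ow ov w ow2 F by simp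
      then show ?thesis using F by blast
    qed
  qed
  have finU: "finite (\<Union>F\<in>set Fs. P1 F \<union> P2 F)"
  proof -
    have "(\<Union>F\<in>set Fs. P1 F \<union> P2 F) \<subseteq> X \<times> X" unfolding P1_def P2_def by auto
    then show ?thesis using fX by (simp add: finite_subset)
  qed
  have "card (DEs E X) \<le> card (\<Union>F\<in>set Fs. P1 F \<union> P2 F)" using card_mono[OF finU sub] .
  also have "\<dots> \<le> (\<Sum>F\<in>set Fs. card (P1 F \<union> P2 F))" by (rule card_UN_le) simp
  also have "\<dots> \<le> (\<Sum>F\<in>set Fs. 2 * card X)"
  proof (rule sum_mono)
    fix F assume F: "F \<in> set Fs"
    have "card (P1 F \<union> P2 F) \<le> card (P1 F) + card (P2 F)" by (rule card_Un_le)
    then show "card (P1 F \<union> P2 F) \<le> 2 * card X" using c1[OF F] c2[OF F] by simp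
  qed
  also have "\<dots> = card (set Fs) * (2 * card X)" by simp
  also have "\<dots> \<le> a * (2 * card X)" using Fs(1) card_length by (metis mult_le_mono1)
  finally show ?thesis by simp
qed

lemma card_DEs: assumes s: "simple_graph V E" and X: "X \<subseteq> V"
  shows "card (DEs E X) = (\<Sum>u\<in>X. card (Nb E u \<inter> X))"
proof -
  have fX: "finite X" using X s unfolding simple_graph_def by (metis finite_subset)
  show ?thesis unfolding DEs_def by (rule card_SigmaI[OF fX]) (simp add: Nb_finite[OF s])
qed

lemma low_vertex:
  assumes s: "simple_graph V E" and X: "X \<subseteq> V" "X \<noteq> {}"
    and Fs: "length Fs = a" "\<forall>F\<in>set Fs. forest F" "E \<subseteq> \<Union>(set Fs)"
  shows "\<exists>u\<in>X. card (Nb E u \<inter> X) \<le> 2 * a"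
proof (rule ccontr)
  assume "\<not> ?thesis"
  then have h: "\<forall>u\<in>X. 2 * a < card (Nb E u \<inter> X)" by auto
  have fX: "finite X" using X s unfolding simple_graph_def by (metis finite_subset)
  have "(\<Sum>u\<in>X. 2 * a) < (\<Sum>u\<in>X. card (Nb E u \<inter> X))"
    by (rule sum_strict_mono[OF fX X(2)]) (use h in auto)
  then have "card X * (2 * a) < card (DEs E X)" using card_DEs[OF s X(1)] by simp
  then show False using DEs_bound[OF s X(1) Fs] by (simp add: mult.commute)
qed

lemma peel_bound:
  assumes s: "simple_graph V E" and X: "X \<subseteq> V"
    and Fs: "length Fs = a" "\<forall>F\<in>set Fs. forest F" "E \<subseteq> \<Union>(set Fs)"
  shows "card {u\<in>X. T < card (Nb E u \<inter> X)} * (T + 1) \<le> 2 * a * card X"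
proof -
  let ?S = "{u\<in>X. T < card (Nb E u \<inter> X)}"
  have fX: "finite X" using X s unfolding simple_graph_def by (metis finite_subset)
  have "card ?S * (T + 1) = (\<Sum>u\<in>?S. T + 1)" by simp
  also have "\<dots> \<le> (\<Sum>u\<in>?S. card (Nb E u \<inter> X))" by (rule sum_mono) auto
  also have "\<dots> \<le> (\<Sum>u\<in>X. card (Nb E u \<inter> X))" by (rule sum_mono2[OF fX]) auto
  also have "\<dots> = card (DEs E X)" using card_DEs[OF s X] by simp
  also have "\<dots> \<le> 2 * a * card X" using DEs_bound[OF s X Fs] .
  finally show ?thesis .
qed

definition good_rank :: "nat \<Rightarrow> nat set \<Rightarrow> (nat \<times> nat) set \<Rightarrow> (nat \<Rightarrow> nat) \<Rightarrow> bool" where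
  "good_rank a S D \<rho> \<longleftrightarrow> inj_on \<rho> S \<and> (\<forall>u\<in>S. \<rho> u < card S) \<and>
     (\<forall>u\<in>S. card {w\<in>S. (u, w) \<in> D \<and> \<rho> u < \<rho> w} \<le> 2 * a)"

definition degorder :: "nat \<Rightarrow> nat set \<Rightarrow> (nat \<times> nat) set \<Rightarrow> nat \<Rightarrow> nat" where
  "degorder a S D = (SOME \<rho>. good_rank a S D \<rho>)"

lemma rank_exists:
  assumes s: "simple_graph V E"
    and Fs: "length Fs = a" "\<forall>F\<in>set Fs. forest F" "E \<subseteq> \<Union>(set Fs)"
  shows "X \<subseteq> V \<Longrightarrow> \<exists>\<rho>. inj_on \<rho> X \<and> (\<forall>u\<in>X. \<rho> u < card X) \<and> (\<forall>u\<in>X. card {w\<in>Nb E u \<inter> X. \<rho> u < \<rho> w} \<le> 2 * a)"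
proof (induction "card X" arbitrary: X)
  case 0
  have fX: "finite X" using 0 s unfolding simple_graph_def by (metis finite_subset)
  then have "X = {}" using 0 by simp
  then show ?case by simp
next
  case (Suc m)
  have fX: "finite X" using Suc(3) s unfolding simple_graph_def by (metis finite_subset)
  have ne: "X \<noteq> {}" using Suc(2) by auto
  obtain x where x: "x \<in> X" "card (Nb E x \<inter> X) \<le> 2 * a" using low_vertex[OF s Suc(3) ne Fs] by (elim bexE)
  have cm: "m = card (X - {x})" using Suc(2) x(1) fX by simp
  obtain \<rho>' where r: "inj_on \<rho>' (X - {x})" "\<forall>u\<in>X - {x}. \<rho>' u < card (X - {x})"
      "\<forall>u\<in>X - {x}. card {w\<in>Nb E u \<inter> (X - {x}). \<rho>' u < \<rho>' w} \<le> 2 * a"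
  proof -
    have "X - {x} \<subseteq> V" using Suc(3) by blast
    from Suc(1)[OF cm this] show ?thesis by (elim exE conjE) (rule that)
  qed
  define \<rho> where "\<rho> u = (if u = x then 0 else Suc (\<rho>' u))" for u
  have "inj_on \<rho> X"
  proof (rule inj_onI)
    fix u w assume "u \<in> X" "w \<in> X" "\<rho> u = \<rho> w"
    then show "u = w" using r(1) unfolding \<rho>_def inj_on_def by (auto split: if_splits)
  qed
  moreover have "\<forall>u\<in>X. \<rho> u < card X"
  proof
    fix u assume u: "u \<in> X"
    show "\<rho> u < card X"
    proof (cases "u = x")
      case True then show ?thesis unfolding \<rho>_def using Suc(2) by simp
    next
      case False
      then have "\<rho>' u < m" using r(2) u cm by simp
      then show ?thesis unfolding \<rho>_def using False Suc(2) by simp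
    qed
  qed
  moreover have "\<forall>u\<in>X. card {w\<in>Nb E u \<inter> X. \<rho> u < \<rho> w} \<le> 2 * a"
  proof
    fix u assume u: "u \<in> X"
    show "card {w\<in>Nb E u \<inter> X. \<rho> u < \<rho> w} \<le> 2 * a"
    proof (cases "u = x")
      case True
      have "card {w\<in>Nb E u \<inter> X. \<rho> u < \<rho> w} \<le> card (Nb E x \<inter> X)"
        by (rule card_mono) (use fX True in auto)
      then show ?thesis using x(2) by simp
    next
      case False
      have "{w\<in>Nb E u \<inter> X. \<rho> u < \<rho> w} = {w\<in>Nb E u \<inter> (X - {x}). \<rho>' u < \<rho>' w}"
        unfolding \<rho>_def using False by auto
      then show ?thesis using r(3) u False by simp
    qed
  qed
  ultimately show ?case by blast
qed

lemma degorder_good: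
  assumes s: "simple_graph V E" and X: "X \<subseteq> V"
    and Fs: "length Fs = a" "\<forall>F\<in>set Fs. forest F" "E \<subseteq> \<Union>(set Fs)"
  shows "good_rank a X (DEs E X) (degorder a X (DEs E X))"
proof -
  obtain \<rho> where r: "inj_on \<rho> X" "\<forall>u\<in>X. \<rho> u < card X" "\<forall>u\<in>X. card {w\<in>Nb E u \<inter> X. \<rho> u < \<rho> w} \<le> 2 * a"
    using rank_exists[OF s Fs X] by blast
  have "\<forall>u\<in>X. {w\<in>X. (u, w) \<in> DEs E X \<and> \<rho> u < \<rho> w} = {w\<in>Nb E u \<inter> X. \<rho> u < \<rho> w}"
    unfolding DEs_def by auto
  then have "good_rank a X (DEs E X) \<rho>" unfolding good_rank_def using r by simp
  then show ?thesis unfolding degorder_def by (rule someI[where P="good_rank a X (DEs E X)"])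
qed

lemma lex_less:
  fixes a b c d B :: nat
  assumes "b < B" "d < B" "a * B + b < c * B + d"
  shows "a < c \<or> (a = c \<and> b < d)"
proof -
  have "(a * B + b) div B \<le> (c * B + d) div B" using assms(3) by (simp add: div_le_mono)
  moreover have "(a * B + b) div B = a" using assms(1) by simp
  moreover have "(c * B + d) div B = c" using assms(2) by simp
  ultimately have "a \<le> c" by simp
  then show ?thesis using assms(3) by auto
qed

lemma lex_inj:
  fixes a b c d B :: nat
  assumes "b < B" "d < B" "a * B + b = c * B + d"
  shows "b = d"
proof -
  have "(a * B + b) mod B = b" using assms(1) by simp
  moreover have "(c * B + d) mod B = d" using assms(2) by simp
  ultimately show ?thesis using assms(3) by simp
qed

definition Tval :: "nat \<Rightarrow> nat \<Rightarrow> nat" where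
  "Tval L a = nat \<lceil>(2 * real a) powr (1 + 1 / real L)\<rceil>"

definition inn :: "local_input \<Rightarrow> nat" where "inn I = fst I"
definition ia :: "local_input \<Rightarrow> nat" where "ia I = fst (snd I)"
definition ime :: "local_input \<Rightarrow> nat" where "ime I = fst (snd (snd I))"
definition iV :: "local_input \<Rightarrow> nat set" where "iV I = fst (snd (snd (snd I)))"
definition iN :: "local_input \<Rightarrow> nat set" where "iN I = snd (snd (snd (snd I)))"

lemma inp_simps[simp]:
  "inn (local_inp V E a v) = card V" "ia (local_inp V E a v) = a" "ime (local_inp V E a v) = v"
  "iV (local_inp V E a v) = V" "iN (local_inp V E a v) = Nb E v"
  by (simp_all add: inn_def ia_def ime_def iV_def iN_def local_inp_def Nb_def)

fun KS :: "nat \<Rightarrow> local_input \<Rightarrow> history \<Rightarrow> nat \<Rightarrow> nat set" where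
  "KS L I h 0 = iV I"
| "KS L I h (Suc j) = {u \<in> iV I. if u = ime I then (u \<in> KS L I h j \<and> Tval L (ia I) < card (iN I \<inter> KS L I h j))
                                  else (h ! j) u = 1}"

definition dOwn :: "nat \<Rightarrow> local_input \<Rightarrow> history \<Rightarrow> nat" where
  "dOwn L I h = (if ime I \<in> KS L I h L then card (iN I \<inter> KS L I h L) else 0)"

definition dK :: "nat \<Rightarrow> local_input \<Rightarrow> history \<Rightarrow> nat \<Rightarrow> nat" where
  "dK L I h u = (if u = ime I then dOwn L I h else (h ! L) u)"

definition offK :: "nat \<Rightarrow> local_input \<Rightarrow> history \<Rightarrow> nat \<Rightarrow> nat" where
  "offK L I h u = (\<Sum>y\<in>{y\<in>iV I. y < u}. dK L I h y)"

definition inblkK :: "nat \<Rightarrow> local_input \<Rightarrow> history \<Rightarrow> nat \<Rightarrow> bool" where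
  "inblkK L I h x \<longleftrightarrow> offK L I h (ime I) \<le> rnk (iV I) x \<and> rnk (iV I) x < offK L I h (ime I) + dOwn L I h"

definition nbrK :: "nat \<Rightarrow> local_input \<Rightarrow> history \<Rightarrow> nat \<Rightarrow> nat" where
  "nbrK L I h x = elem (iN I \<inter> KS L I h L) (rnk (iV I) x - offK L I h (ime I))"

definition ritem :: "nat \<Rightarrow> local_input \<Rightarrow> history \<Rightarrow> (nat \<times> nat) option" where
  "ritem L I h = (if inblkK L I h (ime I) then Some (ime I, nbrK L I h (ime I))
     else if (\<exists>u. u \<in> iV I \<and> u \<noteq> ime I \<and> (h ! Suc L) u \<noteq> 0)
     then Some ((SOME u. u \<in> iV I \<and> u \<noteq> ime I \<and> (h ! Suc L) u \<noteq> 0),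
                (h ! Suc L) (SOME u. u \<in> iV I \<and> u \<noteq> ime I \<and> (h ! Suc L) u \<noteq> 0) - 1)
     else None)"

definition enc :: "nat \<Rightarrow> nat \<times> nat \<Rightarrow> nat" where "enc B p = fst p * B + snd p + 1"
definition dec :: "nat \<Rightarrow> nat \<Rightarrow> nat \<times> nat" where "dec B z = ((z - 1) div B, (z - 1) mod B)"

definition leader :: "local_input \<Rightarrow> nat" where "leader I = Min (iV I)"

definition KE :: "nat \<Rightarrow> nat \<Rightarrow> local_input \<Rightarrow> history \<Rightarrow> (nat \<times> nat) set" where
  "KE k L I h = {q. \<exists>x\<in>iV I. (x \<noteq> ime I \<and> (h ! Suc (Suc L)) x \<noteq> 0 \<and> q = dec (inn I ^ k) ((h ! Suc (Suc L)) x))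
                         \<or> (x = ime I \<and> ritem L I h = Some q)}"

definition lrank :: "nat \<Rightarrow> nat \<Rightarrow> local_input \<Rightarrow> history \<Rightarrow> nat \<Rightarrow> nat" where
  "lrank k L I h = degorder (ia I) (KS L I h L) (KE k L I h)"

definition ownrk :: "nat \<Rightarrow> nat \<Rightarrow> local_input \<Rightarrow> history \<Rightarrow> nat" where
  "ownrk k L I h = (if ime I = leader I then (if ime I \<in> KS L I h L then lrank k L I h (ime I) else 0)
                    else (h ! (L + 3)) (leader I))"

definition rkK :: "nat \<Rightarrow> nat \<Rightarrow> local_input \<Rightarrow> history \<Rightarrow> nat \<Rightarrow> nat" where
  "rkK k L I h u = (if u = ime I then ownrk k L I h else (h ! (L + 4)) u)"

definition layK :: "nat \<Rightarrow> local_input \<Rightarrow> history \<Rightarrow> nat \<Rightarrow> nat" where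
  "layK L I h u = card {j \<in> {1..L}. u \<in> KS L I h j}"

definition keyK :: "nat \<Rightarrow> nat \<Rightarrow> local_input \<Rightarrow> history \<Rightarrow> nat \<Rightarrow> nat" where
  "keyK k L I h u = (layK L I h u * inn I ^ k + rkK k L I h u) * inn I ^ k + u"

definition outsK :: "nat \<Rightarrow> nat \<Rightarrow> local_input \<Rightarrow> history \<Rightarrow> nat set" where
  "outsK k L I h = {w \<in> iN I. keyK k L I h (ime I) < keyK k L I h w}"

definition raw :: "nat \<Rightarrow> nat \<Rightarrow> msg_fun" where
  "raw k L I h x =
    (if length h < L then (if ime I \<in> KS L I h (Suc (length h)) then 1 else 0)
     else if length h = L then dOwn L I h
     else if length h = L + 1 then (if inblkK L I h x then nbrK L I h x + 1 else 0)
     else if length h = L + 2 then (if x = leader I then (case ritem L I h of Some p \<Rightarrow> enc (inn I ^ k) p | None \<Rightarrow> 0) else 0)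
     else if length h = L + 3 then (if ime I = leader I \<and> x \<in> KS L I h L then lrank k L I h x else 0)
     else if length h = L + 4 then ownrk k L I h
     else if length h = L + 5 then (if x \<in> outsK k L I h then rnk (outsK k L I h) x + 1 else 0)
     else 0)"

definition msgf :: "nat \<Rightarrow> nat \<Rightarrow> msg_fun" where
  "msgf k L I h x = (if raw k L I h x < inn I ^ (2 * k + 2) then raw k L I h x else 0)"

definition outf :: "nat \<Rightarrow> nat \<Rightarrow> out_fun" where
  "outf k L I h u = (if keyK k L I h (ime I) < keyK k L I h u
                     then (rnk (outsK k L I h) u + 1, True)
                     else ((h ! (L + 5)) u, False))"

lemma Tval_ge_real:
  shows "(2 * real a) powr (1 + 1 / real L) \<le> real (Tval L a)"
  unfolding Tval_def by linarith

lemma Tval_ge2a: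
  assumes "a \<ge> 1"
  shows "2 * a \<le> Tval L a"
proof -
  have "1 \<le> 2 * real a" using assms by simp
  then have "(2 * real a) powr 1 \<le> (2 * real a) powr (1 + 1 / real L)" by (intro powr_mono) auto
  then have "2 * real a \<le> real (Tval L a)" using Tval_ge_real[of a L] assms by simp
  then show ?thesis by linarith
qed

lemma Tval_pow:
  assumes "a \<ge> 1" "L \<ge> 1"
  shows "(2 * a) ^ (L + 1) \<le> Tval L a ^ L"
proof -
  let ?x = "2 * real a"
  have x0: "?x > 0" using assms by simp
  have "real ((2 * a) ^ (L + 1)) = ?x ^ (L + 1)" by simp
  also have "\<dots> = ?x powr real (L + 1)" by (simp only: powr_realpow[OF x0])
  also have "\<dots> = ?x powr (real L * (1 + 1 / real L))"
  proof -
    have eq: "real L * (1 + 1 / real L) = real (L + 1)" using assms(2) by (simp add: field_simps)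
    show ?thesis by (simp only: eq)
  qed
  also have "\<dots> = (?x powr (1 + 1 / real L)) ^ L" using powr_power[of ?x] x0 by simp
  also have "\<dots> \<le> real (Tval L a) ^ L"
    by (rule power_mono[OF Tval_ge_real]) simp
  also have "\<dots> = real (Tval L a ^ L)" by simp
  finally show ?thesis by linarith
qed

lemma Tval_le:
  assumes e: "\<epsilon> > 0" and a: "a \<ge> 1" and L: "L = nat \<lceil>1 / \<epsilon>\<rceil>"
  shows "real (Tval L a) \<le> (2 powr (1 + \<epsilon>) + 1) * real a powr (1 + \<epsilon>)"
proof -
  have L1: "real L \<ge> 1 / \<epsilon>" using L by linarith
  have Lp: "real L > 0" using L1 e by (smt (verit) divide_pos_pos)
  have "1 / real L \<le> \<epsilon>" using L1 e Lp by (simp add: field_simps)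
  then have "(2 * real a) powr (1 + 1 / real L) \<le> (2 * real a) powr (1 + \<epsilon>)"
    using a by (intro powr_mono) auto
  also have "\<dots> = 2 powr (1 + \<epsilon>) * real a powr (1 + \<epsilon>)" by (simp add: powr_mult)
  finally have h: "(2 * real a) powr (1 + 1 / real L) \<le> 2 powr (1 + \<epsilon>) * real a powr (1 + \<epsilon>)" .
  have "real (Tval L a) \<le> (2 * real a) powr (1 + 1 / real L) + 1"
  proof -
    let ?y = "(2 * real a) powr (1 + 1 / real L)"
    have y0: "0 \<le> ?y" by simp
    have "0 \<le> \<lceil>?y\<rceil>" using ceiling_mono[OF y0] by simp
    then have "real (nat \<lceil>?y\<rceil>) = real_of_int \<lceil>?y\<rceil>" by simp
    moreover have "real_of_int \<lceil>?y\<rceil> < ?y + 1" by linarith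
    ultimately show ?thesis unfolding Tval_def by simp
  qed
  moreover have "1 \<le> real a powr (1 + \<epsilon>)" using a e by (intro ge_one_powr_ge_zero) auto
  ultimately show ?thesis using h by (simp add: algebra_simps)
qed

fun St :: "nat \<Rightarrow> nat \<Rightarrow> nat set \<Rightarrow> nat set set \<Rightarrow> nat \<Rightarrow> nat set" where
  "St L a V E 0 = V"
| "St L a V E (Suc j) = {u \<in> St L a V E j. Tval L a < card (Nb E u \<inter> St L a V E j)}"

locale alg =
  fixes V :: "nat set" and E :: "nat set set" and a L k :: nat
  assumes sg: "simple_graph V E" and ids: "V \<subseteq> {..<card V ^ k}" and arb: "arboricity E = a"
    and a2: "a \<ge> 2" and L1: "L \<ge> 1"
begin

abbreviation "S \<equiv> St L a V E"
abbreviation "T \<equiv> Tval L a"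
abbreviation "B \<equiv> card V ^ k"

lemma finV: "finite V" using sg unfolding simple_graph_def by simp

lemma fin_sub: "X \<subseteq> V \<Longrightarrow> finite X" using finV by (rule finite_subset[rotated])

lemma Fs_ex: "\<exists>Fs. length Fs = a \<and> (\<forall>F\<in>set Fs. forest F) \<and> E \<subseteq> \<Union>(set Fs)"
  using arb_witness[OF sg] arb by simp

lemma E_ne: "E \<noteq> {}"
proof
  assume "E = {}"
  then have "\<exists>Fs :: nat set set list. length Fs = 0 \<and> (\<forall>F\<in>set Fs. forest F) \<and> E \<subseteq> \<Union>(set Fs)" by simp
  then have "arboricity E = 0" unfolding arboricity_def by (rule Least_eq_0)
  then show False using arb a2 by simp
qed

lemma n2: "card V \<ge> 2"
proof -
  obtain e where "e \<in> E" using E_ne by blast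
  then have "\<exists>x y. e = {x, y} \<and> x \<in> V \<and> y \<in> V \<and> x \<noteq> y" by (rule simple_edge[OF sg])
  then obtain x y where xy: "e = {x, y}" "x \<in> V" "y \<in> V" "x \<noteq> y" by (elim exE conjE)
  have "{x, y} \<subseteq> V" using xy by simp
  then have "card {x, y} \<le> card V" using finV by (rule card_mono[rotated])
  then show ?thesis using xy(4) by simp
qed

lemma k1: "k \<ge> 1"
proof (rule ccontr)
  assume "\<not> k \<ge> 1"
  then have "k = 0" by simp
  then have "V \<subseteq> {0}" using ids by auto
  then have "card V \<le> card {0::nat}" by (rule card_mono[rotated]) simp
  then have "card V \<le> 1" by simp
  then show False using n2 by simp
qed

lemma idB: "u \<in> V \<Longrightarrow> u < B" using ids by auto

lemma nB: "card V \<le> B"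
proof -
  have "card V ^ 1 \<le> card V ^ k" using k1 n2 by (intro power_increasing) auto
  then show ?thesis by simp
qed

lemma B2_lt: "B * B < card V ^ (2 * k + 2)"
proof -
  have "B * B = card V ^ (2 * k)" by (simp add: power_add[symmetric] mult_2)
  also have "\<dots> < card V ^ (2 * k + 2)" using n2 by (intro power_strict_increasing) auto
  finally show ?thesis .
qed

lemma n_lt: "card V < card V ^ (2 * k + 2)"
proof -
  have "card V ^ 1 < card V ^ (2 * k + 2)" using n2 by (intro power_strict_increasing) auto
  then show ?thesis by simp
qed

lemma S_sub: "S j \<subseteq> V"
  by (induction j) auto

lemma S_Suc_sub: "S (Suc j) \<subseteq> S j" by auto

lemma S_anti: "i \<le> j \<Longrightarrow> S j \<subseteq> S i"
proof (induction j)
  case 0 then show ?case by simp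
next
  case (Suc j)
  then show ?case using S_Suc_sub by (metis le_Suc_eq order_refl subset_trans)
qed

definition lay :: "nat \<Rightarrow> nat" where "lay u = card {j \<in> {1..L}. u \<in> S j}"

lemma lay_le: "lay u \<le> L"
proof -
  have "card {j \<in> {1..L}. u \<in> S j} \<le> card {1..L}" by (rule card_mono) auto
  then show ?thesis unfolding lay_def by simp
qed

lemma lay_iff: assumes u: "u \<in> V" and j: "j \<le> L" shows "u \<in> S j \<longleftrightarrow> j \<le> lay u"
proof
  assume "u \<in> S j"
  then have "{1..j} \<subseteq> {j \<in> {1..L}. u \<in> S j}"
  proof (intro subsetI)
    fix i assume i: "i \<in> {1..j}" and uj: "u \<in> S j"
    then have "u \<in> S i" using subsetD[OF S_anti[of i j]] by simp
    then show "i \<in> {j \<in> {1..L}. u \<in> S j}" using i j by simp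
  qed
  then have "card {1..j} \<le> lay u" unfolding lay_def by (rule card_mono[rotated]) simp
  then show "j \<le> lay u" by simp
next
  assume jl: "j \<le> lay u"
  show "u \<in> S j"
  proof (rule ccontr)
    assume nu: "u \<notin> S j"
    have "j \<noteq> 0" using nu u by (cases j) auto
    have "{i \<in> {1..L}. u \<in> S i} \<subseteq> {1..j - 1}"
    proof
      fix i assume i: "i \<in> {i \<in> {1..L}. u \<in> S i}"
      have "\<not> j \<le> i" using S_anti nu i by blast
      then show "i \<in> {1..j - 1}" using i by auto
    qed
    then have "lay u \<le> card {1..j - 1}" unfolding lay_def by (rule card_mono[rotated]) simp
    then show False using jl \<open>j \<noteq> 0\<close> by simp
  qed
qed

definition d :: "nat \<Rightarrow> nat" where "d u = (if u \<in> S L then card (Nb E u \<inter> S L) else 0)"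
definition off :: "nat \<Rightarrow> nat" where "off u = (\<Sum>y\<in>{y\<in>V. y < u}. d y)"
definition inb :: "nat \<Rightarrow> nat \<Rightarrow> bool" where "inb ov x \<longleftrightarrow> off ov \<le> rnk V x \<and> rnk V x < off ov + d ov"
definition nbr :: "nat \<Rightarrow> nat \<Rightarrow> nat" where "nbr ov x = elem (Nb E ov \<inter> S L) (rnk V x - off ov)"

lemma d_le: "d u \<le> card V"
proof -
  have "card (Nb E u \<inter> S L) \<le> card V" by (rule card_mono[OF finV]) (use Nb_sub[OF sg] in auto)
  then show ?thesis unfolding d_def by simp
qed

lemma off_mono: assumes "ov \<in> V" "ov < ov'" shows "off ov + d ov \<le> off ov'"
proof -
  have "{y\<in>V. y < ov} \<union> {ov} \<subseteq> {y\<in>V. y < ov'}" using assms by auto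
  then have "(\<Sum>y\<in>{y\<in>V. y < ov} \<union> {ov}. d y) \<le> off ov'" unfolding off_def
    by (intro sum_mono2) (auto simp: finV)
  moreover have "(\<Sum>y\<in>{y\<in>V. y < ov} \<union> {ov}. d y) = off ov + d ov"
    unfolding off_def using finV by (subst sum.union_disjoint) auto
  ultimately show ?thesis by simp
qed

lemma inb_unique: assumes "ov \<in> V" "ov' \<in> V" "inb ov x" "inb ov' x" shows "ov = ov'"
proof (rule ccontr)
  assume ne: "ov \<noteq> ov'"
  show False
  proof (cases "ov < ov'")
    case True
    then show False using off_mono[OF assms(1) True] assms(3,4) unfolding inb_def by linarith
  next
    case False
    then have "ov' < ov" using ne by simp
    then show False using off_mono[OF assms(2) \<open>ov' < ov\<close>] assms(3,4) unfolding inb_def by linarith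
  qed
qed

lemma inb_SL: "inb ov x \<Longrightarrow> ov \<in> S L" unfolding inb_def d_def by (auto split: if_splits)

lemma nbr_in: assumes "inb ov x" shows "nbr ov x \<in> Nb E ov \<inter> S L"
proof -
  have "off ov \<le> rnk V x \<and> rnk V x < off ov + card (Nb E ov \<inter> S L)" using assms inb_SL[OF assms] unfolding inb_def d_def by simp
  then have "rnk V x - off ov < card (Nb E ov \<inter> S L)" by linarith
  then show ?thesis unfolding nbr_def using elem_prop Nb_finite[OF sg] by blast
qed

definition Dsum :: nat where "Dsum = (\<Sum>y\<in>V. d y)"

lemma off_le_D: assumes "ov \<in> V" shows "off ov + d ov \<le> Dsum"
proof -
  have "{y\<in>V. y < ov} \<union> {ov} \<subseteq> V" using assms by auto
  moreover have "ov \<notin> {y\<in>V. y < ov}" by simp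
  ultimately have "(\<Sum>y\<in>{y\<in>V. y < ov} \<union> {ov}. d y) \<le> Dsum" unfolding Dsum_def
    by (intro sum_mono2[OF finV]) auto
  moreover have "(\<Sum>y\<in>{y\<in>V. y < ov} \<union> {ov}. d y) = off ov + d ov"
    unfolding off_def using finV by (subst sum.union_disjoint) auto
  ultimately show ?thesis by simp
qed

lemma Dsum_eq: "Dsum = card (DEs E (S L))"
proof -
  have "Dsum = (\<Sum>y\<in>S L. d y)" unfolding Dsum_def
    by (rule sum.mono_neutral_right[OF finV S_sub]) (auto simp: d_def)
  also have "\<dots> = (\<Sum>y\<in>S L. card (Nb E y \<inter> S L))" by (rule sum.cong) (auto simp: d_def)
  also have "\<dots> = card (DEs E (S L))" using card_DEs[OF sg S_sub] by simp
  finally show ?thesis .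
qed

lemma peel: "card (S j) * (T + 1) ^ j \<le> (2 * a) ^ j * card V"
proof (induction j)
  case 0 then show ?case by simp
next
  case (Suc j)
  obtain Fs where Fs: "length Fs = a" "\<forall>F\<in>set Fs. forest F" "E \<subseteq> \<Union>(set Fs)" using Fs_ex by blast
  have "card (S (Suc j)) * (T + 1) \<le> 2 * a * card (S j)"
    using peel_bound[OF sg S_sub[of j] Fs, where T="Tval L a"] by simp
  then have "card (S (Suc j)) * (T + 1) * (T + 1) ^ j \<le> 2 * a * card (S j) * (T + 1) ^ j"
    by (rule mult_right_mono) simp
  moreover have "card (S (Suc j)) * (T + 1) ^ Suc j = card (S (Suc j)) * (T + 1) * (T + 1) ^ j"
    by (simp only: power_Suc mult.assoc)
  ultimately have "card (S (Suc j)) * (T + 1) ^ Suc j \<le> 2 * a * card (S j) * (T + 1) ^ j" by simp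
  also have "\<dots> \<le> 2 * a * ((2 * a) ^ j * card V)" using Suc by (simp add: mult.assoc)
  also have "\<dots> = (2 * a) ^ Suc j * card V" by simp
  finally show ?case .
qed

lemma SL_small: "2 * a * card (S L) \<le> card V"
proof -
  have "2 * a * card (S L) * (T + 1) ^ L \<le> 2 * a * ((2 * a) ^ L * card V)"
    using peel[of L] by (simp add: mult.assoc)
  also have "\<dots> = (2 * a) ^ (L + 1) * card V" by simp
  also have "\<dots> \<le> T ^ L * card V" using Tval_pow[of a L] a2 L1 by simp
  also have "\<dots> \<le> (T + 1) ^ L * card V" by (simp add: power_mono)
  finally have "2 * a * card (S L) * (T + 1) ^ L \<le> card V * (T + 1) ^ L" by (simp add: mult.commute)
  then show ?thesis by simp
qed

lemma D_le: "Dsum \<le> card V"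
proof -
  obtain Fs where Fs: "length Fs = a" "\<forall>F\<in>set Fs. forest F" "E \<subseteq> \<Union>(set Fs)" using Fs_ex by blast
  show ?thesis using Dsum_eq DEs_bound[OF sg S_sub Fs, of L] SL_small by simp
qed

definition titem :: "nat \<Rightarrow> (nat \<times> nat) option" where
  "titem x = (if inb x x then Some (x, nbr x x)
     else if (\<exists>u. u \<in> V \<and> u \<noteq> x \<and> inb u x)
     then Some ((SOME u. u \<in> V \<and> u \<noteq> x \<and> inb u x), nbr (SOME u. u \<in> V \<and> u \<noteq> x \<and> inb u x) x)
     else None)"

lemma titem_Some: assumes "x \<in> V" "titem x = Some q" shows "\<exists>ov\<in>V. inb ov x \<and> q = (ov, nbr ov x)"
proof (cases "inb x x")
  case True then show ?thesis using assms unfolding titem_def by auto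
next
  case False
  then have ex: "\<exists>u. u \<in> V \<and> u \<noteq> x \<and> inb u x" using assms unfolding titem_def by (auto split: if_splits)
  let ?u = "SOME u. u \<in> V \<and> u \<noteq> x \<and> inb u x"
  have u: "?u \<in> V \<and> ?u \<noteq> x \<and> inb ?u x" using someI_ex[OF ex] .
  have "q = (?u, nbr ?u x)" using assms False ex unfolding titem_def by simp
  then show ?thesis using u by blast
qed

lemma titem_of: assumes "x \<in> V" "ov \<in> V" "inb ov x" shows "titem x = Some (ov, nbr ov x)"
proof (cases "inb x x")
  case True
  then have "x = ov" using inb_unique assms by blast
  then show ?thesis using True unfolding titem_def by simp
next
  case False
  have ne: "ov \<noteq> x" using False assms(3) by auto
  then have ex: "\<exists>u. u \<in> V \<and> u \<noteq> x \<and> inb u x" using assms by blast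
  let ?u = "SOME u. u \<in> V \<and> u \<noteq> x \<and> inb u x"
  have u: "?u \<in> V \<and> ?u \<noteq> x \<and> inb ?u x" using someI_ex[OF ex] .
  then have "?u = ov" using inb_unique assms by blast
  then show ?thesis using False ex unfolding titem_def by simp
qed

lemma titem_set: "{q. \<exists>x\<in>V. titem x = Some q} = DEs E (S L)"
proof
  show "{q. \<exists>x\<in>V. titem x = Some q} \<subseteq> DEs E (S L)"
  proof
    fix q assume "q \<in> {q. \<exists>x\<in>V. titem x = Some q}"
    then obtain x where x: "x \<in> V" "titem x = Some q" by blast
    then obtain ov where ov: "ov \<in> V" "inb ov x" "q = (ov, nbr ov x)" using titem_Some by blast
    show "q \<in> DEs E (S L)" using ov inb_SL[OF ov(2)] nbr_in[OF ov(2)] unfolding DEs_def by simp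
  qed
next
  show "DEs E (S L) \<subseteq> {q. \<exists>x\<in>V. titem x = Some q}"
  proof
    fix q assume q: "q \<in> DEs E (S L)"
    obtain ov w where ow: "q = (ov, w)" by (cases q)
    have ov: "ov \<in> S L" and w: "w \<in> Nb E ov \<inter> S L" using q ow unfolding DEs_def by auto
    have ovV: "ov \<in> V" using ov S_sub by blast
    have fN: "finite (Nb E ov \<inter> S L)" using Nb_finite[OF sg] by simp
    let ?i = "rnk (Nb E ov \<inter> S L) w"
    have i: "?i < d ov" using rnk_less[OF fN w] ov unfolding d_def by simp
    let ?p = "off ov + ?i"
    have p: "?p < card V" using off_le_D[OF ovV] D_le i by linarith
    let ?x = "elem V ?p"
    have x: "?x \<in> V" "rnk V ?x = ?p" using elem_prop[OF finV p] by auto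
    have ib: "inb ov ?x" unfolding inb_def using x i by simp
    have "nbr ov ?x = w" unfolding nbr_def using x(2) elem_rnk[OF fN w] by simp
    then have "titem ?x = Some q" using titem_of[OF x(1) ovV ib] ow by simp
    then show "q \<in> {q. \<exists>x\<in>V. titem x = Some q}" using x(1) by blast
  qed
qed

end

declare hist.simps(2)[simp del]

context alg begin

abbreviation "Iv \<equiv> local_inp V E a"
abbreviation H :: "nat \<Rightarrow> nat \<Rightarrow> history" where "H r v \<equiv> hist (msgf k L) Iv V r v"

lemma H_len[simp]: "length (H r v) = r" by (rule hist_length)

lemma H_at: "j < r \<Longrightarrow> u \<in> V \<Longrightarrow> u \<noteq> v \<Longrightarrow> (H r v ! j) u = msgf k L (Iv u) (H j u) v"
  using hist_nth[of j r "msgf k L" Iv V v] by simp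

lemma msgf_lt: "msgf k L (Iv u) h x < card V ^ (2 * k + 2)"
  using n2 unfolding msgf_def by simp

lemma msgf_eq: "raw k L (Iv u) h x < card V ^ (2 * k + 2) \<Longrightarrow> msgf k L (Iv u) h x = raw k L (Iv u) h x"
  unfolding msgf_def by simp

lemma KS_Suc_mem: "u \<in> KS L I h (Suc j) \<longleftrightarrow> u \<in> iV I \<and> (if u = ime I then (u \<in> KS L I h j \<and> Tval L (ia I) < card (iN I \<inter> KS L I h j)) else (h ! j) u = 1)"
  by simp

lemma V1: "j \<le> L \<Longrightarrow> j \<le> r \<Longrightarrow> v \<in> V \<Longrightarrow> KS L (Iv v) (H r v) j = S j"
proof (induction j arbitrary: r v)
  case 0 then show ?case by simp
next
  case (Suc j)
  have IH: "KS L (Iv v) (H r v) j = S j" using Suc by simp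
  have own: "u \<in> KS L (Iv u) (H j u) (Suc j) \<longleftrightarrow> u \<in> S (Suc j)" if "u \<in> V" for u
  proof -
    have "KS L (Iv u) (H j u) j = S j" using Suc.IH[of j u] Suc.prems that by simp
    then show ?thesis using that S_sub by (auto simp: KS_Suc_mem)
  qed
  have other: "(H r v ! j) u = (if u \<in> S (Suc j) then 1 else 0)" if "u \<in> V" "u \<noteq> v" for u
  proof -
    have "(H r v ! j) u = msgf k L (Iv u) (H j u) v" using H_at Suc.prems that by simp
    also have "\<dots> = raw k L (Iv u) (H j u) v"
    proof (rule msgf_eq)
      have "raw k L (Iv u) (H j u) v \<le> 1" unfolding raw_def using Suc.prems by simp
      then show "raw k L (Iv u) (H j u) v < card V ^ (2 * k + 2)" using n2 n_lt by linarith
    qed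
    also have "\<dots> = (if u \<in> S (Suc j) then 1 else 0)" using Suc.prems own[OF that(1)] unfolding raw_def by simp
    finally show ?thesis .
  qed
  show ?case
  proof (rule set_eqI)
    fix u
    show "u \<in> KS L (Iv v) (H r v) (Suc j) \<longleftrightarrow> u \<in> S (Suc j)"
    proof (cases "u = v")
      case True
      then show ?thesis using IH Suc.prems S_sub by (auto simp: KS_Suc_mem)
    next
      case False
      show ?thesis
      proof (cases "u \<in> V")
        case True
        then show ?thesis using other[OF True False] IH by (auto simp: KS_Suc_mem)
      next
        case nV: False
        then show ?thesis using S_sub[of "Suc j"] by (auto simp: KS_Suc_mem)
      qed
    qed
  qed
qed

lemma SL_view: "L \<le> r \<Longrightarrow> v \<in> V \<Longrightarrow> KS L (Iv v) (H r v) L = S L"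
  using V1 by simp

lemma dOwn_view: "L \<le> r \<Longrightarrow> v \<in> V \<Longrightarrow> dOwn L (Iv v) (H r v) = d v"
  unfolding dOwn_def d_def using SL_view by simp

lemma dK_view: assumes "Suc L \<le> r" "v \<in> V" "u \<in> V" shows "dK L (Iv v) (H r v) u = d u"
proof (cases "u = v")
  case True then show ?thesis unfolding dK_def using dOwn_view assms by simp
next
  case False
  have "(H r v ! L) u = msgf k L (Iv u) (H L u) v" using H_at assms False by simp
  also have "\<dots> = raw k L (Iv u) (H L u) v"
  proof (rule msgf_eq)
    have "raw k L (Iv u) (H L u) v = d u" unfolding raw_def using dOwn_view[of L u] assms by simp
    then show "raw k L (Iv u) (H L u) v < card V ^ (2 * k + 2)" using d_le[of u] n_lt by linarith
  qed
  also have "\<dots> = d u" unfolding raw_def using dOwn_view[of L u] assms by simp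
  finally show ?thesis unfolding dK_def using False by simp
qed

lemma offK_view: assumes "Suc L \<le> r" "v \<in> V" shows "offK L (Iv v) (H r v) u = off u"
  unfolding offK_def off_def using dK_view[OF assms] by (intro sum.cong) auto

lemma inblkK_view: assumes "Suc L \<le> r" "v \<in> V" shows "inblkK L (Iv v) (H r v) x \<longleftrightarrow> inb v x"
  unfolding inblkK_def inb_def using offK_view[OF assms] dOwn_view assms by simp

lemma nbrK_view: assumes "Suc L \<le> r" "v \<in> V" shows "nbrK L (Iv v) (H r v) x = nbr v x"
  unfolding nbrK_def nbr_def using offK_view[OF assms] SL_view assms by simp

lemma nbr_B: "inb ov x \<Longrightarrow> nbr ov x < B"
  using nbr_in Nb_sub[OF sg] idB by blast

lemma B_le_BB: "B \<le> B * B"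
  using k1 n2 by simp

lemma relay_msg: assumes "Suc (Suc L) \<le> r" "x \<in> V" "u \<in> V" "u \<noteq> x"
  shows "(H r x ! Suc L) u = (if inb u x then nbr u x + 1 else 0)"
proof -
  have "(H r x ! Suc L) u = msgf k L (Iv u) (H (Suc L) u) x" using H_at assms by simp
  also have "\<dots> = raw k L (Iv u) (H (Suc L) u) x"
  proof (rule msgf_eq)
    have "raw k L (Iv u) (H (Suc L) u) x = (if inb u x then nbr u x + 1 else 0)"
      unfolding raw_def using inblkK_view[of "Suc L" u] nbrK_view[of "Suc L" u] assms by simp
    moreover have "inb u x \<Longrightarrow> nbr u x + 1 < card V ^ (2 * k + 2)"
      using nbr_B[of u x] B_le_BB B2_lt by linarith
    ultimately show "raw k L (Iv u) (H (Suc L) u) x < card V ^ (2 * k + 2)" using n_lt by auto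
  qed
  also have "\<dots> = (if inb u x then nbr u x + 1 else 0)"
    unfolding raw_def using inblkK_view[of "Suc L" u] nbrK_view[of "Suc L" u] assms by simp
  finally show ?thesis .
qed

lemma ritem_view: assumes r: "Suc (Suc L) \<le> r" and x: "x \<in> V"
  shows "ritem L (Iv x) (H r x) = titem x"
proof -
  have ib: "inblkK L (Iv x) (H r x) x \<longleftrightarrow> inb x x" using inblkK_view r x by simp
  have nb: "nbrK L (Iv x) (H r x) x = nbr x x" using nbrK_view r x by simp
  have P: "(\<lambda>u. u \<in> V \<and> u \<noteq> x \<and> (H r x ! Suc L) u \<noteq> 0) = (\<lambda>u. u \<in> V \<and> u \<noteq> x \<and> inb u x)"
    using relay_msg[OF r x] by (auto simp: fun_eq_iff split: if_splits)
  show ?thesis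
  proof (cases "inb x x")
    case True
    then show ?thesis unfolding ritem_def titem_def using ib nb by simp
  next
    case False
    show ?thesis
    proof (cases "\<exists>u. u \<in> V \<and> u \<noteq> x \<and> inb u x")
      case True
      let ?u = "SOME u. u \<in> V \<and> u \<noteq> x \<and> inb u x"
      have ex2: "\<exists>u. u \<in> V \<and> u \<noteq> x \<and> (H r x ! Suc L) u \<noteq> 0" using True P by metis
      have eqS: "(SOME u. u \<in> V \<and> u \<noteq> x \<and> (H r x ! Suc L) u \<noteq> 0) = ?u" using P by simp
      have u: "?u \<in> V \<and> ?u \<noteq> x \<and> inb ?u x" using someI_ex[OF True] .
      have "(H r x ! Suc L) ?u - 1 = nbr ?u x" using relay_msg[OF r x] u by simp
      then show ?thesis unfolding ritem_def titem_def using False ib ex2 eqS True by simp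
    next
      case nex: False
      have "\<not> (\<exists>u. u \<in> V \<and> u \<noteq> x \<and> (H r x ! Suc L) u \<noteq> 0)" using nex P by metis
      then show ?thesis unfolding ritem_def titem_def using False ib nex by simp
    qed
  qed
qed

abbreviation ldr :: nat where "ldr \<equiv> Min V"

lemma ldr_V: "ldr \<in> V" using finV n2 by (intro Min_in) auto

lemma leader_Iv[simp]: "leader (Iv u) = ldr" unfolding leader_def by simp

lemma enc_dec: assumes "w < B" shows "dec B (enc B (ov, w)) = (ov, w)"
proof -
  have B0: "B \<noteq> 0" using assms by linarith
  have "(w + ov * B) div B = ov + w div B" using div_mult_self1[OF B0] by simp
  then have 1: "(ov * B + w) div B = ov" using assms by (simp add: add.commute)
  have "(w + ov * B) mod B = w mod B" using mod_mult_self1 by simp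
  then have 2: "(ov * B + w) mod B = w" using assms by (simp add: add.commute)
  show ?thesis unfolding enc_def dec_def using 1 2 by simp
qed

lemma enc_lt: assumes "ov < B" "w < B" shows "enc B (ov, w) < card V ^ (2 * k + 2)"
proof -
  have "(ov + 1) * B \<le> B * B" by (rule mult_right_mono) (use assms in simp_all)
  then have "ov * B + w + 1 \<le> B * B" using assms(2) by (simp add: algebra_simps)
  then show ?thesis unfolding enc_def using B2_lt by simp
qed

lemma gather_msg: assumes r: "Suc (Suc (Suc L)) \<le> r" and x: "x \<in> V" "x \<noteq> ldr"
  shows "((H r ldr ! Suc (Suc L)) x \<noteq> 0 \<and> q = dec B ((H r ldr ! Suc (Suc L)) x)) \<longleftrightarrow> titem x = Some q"
proof -
  have m: "(H r ldr ! Suc (Suc L)) x = msgf k L (Iv x) (H (Suc (Suc L)) x) ldr" using H_at r x by simp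
  have rw: "raw k L (Iv x) (H (Suc (Suc L)) x) ldr = (case titem x of Some p \<Rightarrow> enc B p | None \<Rightarrow> 0)"
    unfolding raw_def using ritem_view[of "Suc (Suc L)" x] x by (simp split: option.split)
  show ?thesis
  proof (cases "titem x")
    case None
    then have "raw k L (Iv x) (H (Suc (Suc L)) x) ldr = 0" using rw by simp
    then have "(H r ldr ! Suc (Suc L)) x = 0" using m msgf_eq n_lt by simp
    then show ?thesis using None by simp
  next
    case (Some p)
    obtain ov w where p: "p = (ov, w)" by (cases p)
    obtain ov' where ov': "ov' \<in> V" "inb ov' x" "p = (ov', nbr ov' x)" using titem_Some[OF x(1)] Some by blast
    have ovB: "ov < B" and wB: "w < B" using ov' p idB nbr_B by auto
    have "raw k L (Iv x) (H (Suc (Suc L)) x) ldr = enc B (ov, w)" using rw Some p by simp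
    then have "(H r ldr ! Suc (Suc L)) x = enc B (ov, w)" using m msgf_eq enc_lt[OF ovB wB] by simp
    moreover have "enc B (ov, w) \<noteq> 0" unfolding enc_def by simp
    ultimately show ?thesis using Some p enc_dec[OF wB] by auto
  qed
qed

lemma KE_view: assumes r: "Suc (Suc (Suc L)) \<le> r" shows "KE k L (Iv ldr) (H r ldr) = DEs E (S L)"
proof -
  have "KE k L (Iv ldr) (H r ldr) = {q. \<exists>x\<in>V. titem x = Some q}"
  proof (rule set_eqI)
    fix q
    have "(\<exists>x\<in>V. (x \<noteq> ldr \<and> (H r ldr ! Suc (Suc L)) x \<noteq> 0 \<and> q = dec B ((H r ldr ! Suc (Suc L)) x))
             \<or> (x = ldr \<and> ritem L (Iv ldr) (H r ldr) = Some q)) \<longleftrightarrow> (\<exists>x\<in>V. titem x = Some q)"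
    proof
      assume "\<exists>x\<in>V. (x \<noteq> ldr \<and> (H r ldr ! Suc (Suc L)) x \<noteq> 0 \<and> q = dec B ((H r ldr ! Suc (Suc L)) x))
             \<or> (x = ldr \<and> ritem L (Iv ldr) (H r ldr) = Some q)"
      then obtain x where x: "x \<in> V" and h: "(x \<noteq> ldr \<and> (H r ldr ! Suc (Suc L)) x \<noteq> 0 \<and> q = dec B ((H r ldr ! Suc (Suc L)) x))
             \<or> (x = ldr \<and> ritem L (Iv ldr) (H r ldr) = Some q)" by blast
      show "\<exists>x\<in>V. titem x = Some q"
      proof (cases "x = ldr")
        case True
        then have "titem ldr = Some q" using h ritem_view[of r ldr] r ldr_V by simp
        then show ?thesis using ldr_V by blast
      next
        case False
        then have "titem x = Some q" using h gather_msg[OF r x False] by simp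
        then show ?thesis using x by blast
      qed
    next
      assume "\<exists>x\<in>V. titem x = Some q"
      then obtain x where x: "x \<in> V" "titem x = Some q" by blast
      show "\<exists>x\<in>V. (x \<noteq> ldr \<and> (H r ldr ! Suc (Suc L)) x \<noteq> 0 \<and> q = dec B ((H r ldr ! Suc (Suc L)) x))
             \<or> (x = ldr \<and> ritem L (Iv ldr) (H r ldr) = Some q)"
      proof (cases "x = ldr")
        case True
        then have "ritem L (Iv ldr) (H r ldr) = Some q" using x ritem_view[of r ldr] r ldr_V by simp
        then show ?thesis using ldr_V by blast
      next
        case False
        then show ?thesis using x gather_msg[OF r x(1) False] by blast
      qed
    qed
    then show "q \<in> KE k L (Iv ldr) (H r ldr) \<longleftrightarrow> q \<in> {q. \<exists>x\<in>V. titem x = Some q}"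
      unfolding KE_def by simp
  qed
  then show ?thesis using titem_set by simp
qed

definition \<rho> :: "nat \<Rightarrow> nat" where "\<rho> = degorder a (S L) (DEs E (S L))"
definition \<rho>' :: "nat \<Rightarrow> nat" where "\<rho>' u = (if u \<in> S L then \<rho> u else 0)"

lemma rho_good: "good_rank a (S L) (DEs E (S L)) \<rho>"
proof -
  obtain Fs where Fs: "length Fs = a" "\<forall>F\<in>set Fs. forest F" "E \<subseteq> \<Union>(set Fs)" using Fs_ex by blast
  show ?thesis unfolding \<rho>_def using degorder_good[OF sg S_sub Fs] .
qed

lemma rho'_lt: "\<rho>' u < card V"
proof (cases "u \<in> S L")
  case True
  then have "\<rho> u < card (S L)" using rho_good unfolding good_rank_def by blast
  moreover have "card (S L) \<le> card V" using card_mono[OF finV S_sub] .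
  ultimately show ?thesis unfolding \<rho>'_def using True by simp
next
  case False then show ?thesis unfolding \<rho>'_def using n2 by simp
qed

lemma lrank_view: "Suc (Suc (Suc L)) \<le> r \<Longrightarrow> lrank k L (Iv ldr) (H r ldr) = \<rho>"
  unfolding lrank_def \<rho>_def using KE_view SL_view[of r ldr] ldr_V by simp

lemma ownrk_view: assumes r: "L + 4 \<le> r" and u: "u \<in> V" shows "ownrk k L (Iv u) (H r u) = \<rho>' u"
proof (cases "u = ldr")
  case True
  then show ?thesis unfolding ownrk_def \<rho>'_def using lrank_view[of r] SL_view[of r u] r u by simp
next
  case False
  have "(H r u ! (L + 3)) ldr = msgf k L (Iv ldr) (H (L + 3) ldr) u" using H_at r ldr_V False by simp
  also have "\<dots> = raw k L (Iv ldr) (H (L + 3) ldr) u"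
  proof (rule msgf_eq)
    have "raw k L (Iv ldr) (H (L + 3) ldr) u = \<rho>' u"
      unfolding raw_def \<rho>'_def using lrank_view[of "L + 3"] SL_view[of "L + 3" ldr] ldr_V by simp
    then show "raw k L (Iv ldr) (H (L + 3) ldr) u < card V ^ (2 * k + 2)" using rho'_lt[of u] n_lt by linarith
  qed
  also have "\<dots> = \<rho>' u"
    unfolding raw_def \<rho>'_def using lrank_view[of "L + 3"] SL_view[of "L + 3" ldr] ldr_V by simp
  finally show ?thesis unfolding ownrk_def using False by simp
qed

lemma rkK_view: assumes r: "L + 5 \<le> r" and v: "v \<in> V" and u: "u \<in> V" shows "rkK k L (Iv v) (H r v) u = \<rho>' u"
proof (cases "u = v")
  case True
  then show ?thesis unfolding rkK_def using ownrk_view[of r v] r v by simp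
next
  case False
  have "(H r v ! (L + 4)) u = msgf k L (Iv u) (H (L + 4) u) v" using H_at r u False by simp
  also have "\<dots> = raw k L (Iv u) (H (L + 4) u) v"
  proof (rule msgf_eq)
    have "raw k L (Iv u) (H (L + 4) u) v = \<rho>' u" unfolding raw_def using ownrk_view[of "L + 4" u] u by simp
    then show "raw k L (Iv u) (H (L + 4) u) v < card V ^ (2 * k + 2)" using rho'_lt[of u] n_lt by linarith
  qed
  also have "\<dots> = \<rho>' u" unfolding raw_def using ownrk_view[of "L + 4" u] u by simp
  finally show ?thesis unfolding rkK_def using False by simp
qed

lemma layK_view: assumes "L \<le> r" "v \<in> V" shows "layK L (Iv v) (H r v) u = lay u"
proof -
  have "{j \<in> {1..L}. u \<in> KS L (Iv v) (H r v) j} = {j \<in> {1..L}. u \<in> S j}" using V1 assms by auto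
  then show ?thesis unfolding layK_def lay_def by simp
qed

definition key :: "nat \<Rightarrow> nat" where "key u = (lay u * B + \<rho>' u) * B + u"

lemma keyK_view: assumes "L + 5 \<le> r" "v \<in> V" "u \<in> V" shows "keyK k L (Iv v) (H r v) u = key u"
  unfolding keyK_def key_def using layK_view[of r v u] rkK_view[OF assms] assms by simp

definition outs :: "nat \<Rightarrow> nat set" where "outs v = {w \<in> Nb E v. key v < key w}"

lemma outsK_view: assumes "L + 5 \<le> r" "v \<in> V" shows "outsK k L (Iv v) (H r v) = outs v"
proof -
  have "\<forall>x\<in>Nb E v. keyK k L (Iv v) (H r v) x = key x" using keyK_view[OF assms] Nb_sub[OF sg] by blast
  moreover have "keyK k L (Iv v) (H r v) v = key v" using keyK_view[OF assms assms(2)] .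
  ultimately show ?thesis unfolding outsK_def outs_def by auto
qed

end

context alg begin

lemma rho'_B: "\<rho>' u < B" using rho'_lt nB by (rule less_le_trans)

lemma key_less: assumes "u \<in> V" "w \<in> V" "key u < key w"
  shows "lay u < lay w \<or> (lay u = lay w \<and> \<rho>' u \<le> \<rho>' w)"
proof -
  have B0: "0 < B" using nB n2 by linarith
  have "lay u * B + \<rho>' u < lay w * B + \<rho>' w \<or> (lay u * B + \<rho>' u = lay w * B + \<rho>' w \<and> u < w)"
    using lex_less[OF idB[OF assms(1)] idB[OF assms(2)]] assms(3) unfolding key_def by blast
  then show ?thesis
  proof
    assume "lay u * B + \<rho>' u < lay w * B + \<rho>' w"
    then show ?thesis using lex_less[OF rho'_B rho'_B] by fastforce
  next
    assume h: "lay u * B + \<rho>' u = lay w * B + \<rho>' w \<and> u < w"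
    then have e: "\<rho>' u = \<rho>' w" using lex_inj[OF rho'_B rho'_B] by blast
    then have "lay u * B = lay w * B" using h by simp
    then have "lay u = lay w" using B0 by (metis mult_right_cancel less_not_refl)
    then show ?thesis using e by simp
  qed
qed

lemma key_inj: assumes "u \<in> V" "w \<in> V" "key u = key w" shows "u = w"
  using lex_inj[OF idB[OF assms(1)] idB[OF assms(2)]] assms(3) unfolding key_def by blast

lemma outs_sub: "outs v \<subseteq> Nb E v" unfolding outs_def by auto

lemma outs_fin: "finite (outs v)" using Nb_finite[OF sg] outs_sub by (rule finite_subset[rotated])

lemma outs_card: assumes x: "x \<in> V" shows "card (outs x) \<le> T"
proof (cases "lay x < L")
  case True
  let ?j = "lay x"
  have xj: "x \<in> S ?j" using lay_iff[OF x] True by simp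
  have xj1: "x \<notin> S (Suc ?j)" using lay_iff[OF x, of "Suc ?j"] True by simp
  have c: "\<not> T < card (Nb E x \<inter> S ?j)" using xj xj1 by simp
  have "outs x \<subseteq> Nb E x \<inter> S ?j"
  proof
    fix w assume w: "w \<in> outs x"
    then have wN: "w \<in> Nb E x" and lt: "key x < key w" unfolding outs_def by auto
    have wV: "w \<in> V" using wN Nb_sub[OF sg] by blast
    have "lay x \<le> lay w" using key_less[OF x wV lt] by auto
    then have "w \<in> S ?j" using lay_iff[OF wV] True by simp
    then show "w \<in> Nb E x \<inter> S ?j" using wN by simp
  qed
  then have "card (outs x) \<le> card (Nb E x \<inter> S ?j)" using Nb_finite[OF sg] by (intro card_mono) auto
  then show ?thesis using c by simp
next
  case False
  then have lx: "lay x = L" using lay_le[of x] by simp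
  have xL: "x \<in> S L" using lay_iff[OF x] lx by simp
  have g: "inj_on \<rho> (S L)" "card {w\<in>S L. (x, w) \<in> DEs E (S L) \<and> \<rho> x < \<rho> w} \<le> 2 * a"
    using rho_good xL unfolding good_rank_def by auto
  have "outs x \<subseteq> {w\<in>S L. (x, w) \<in> DEs E (S L) \<and> \<rho> x < \<rho> w}"
  proof
    fix w assume w: "w \<in> outs x"
    then have wN: "w \<in> Nb E x" and lt: "key x < key w" unfolding outs_def by auto
    have wV: "w \<in> V" using wN Nb_sub[OF sg] by blast
    have wx: "w \<noteq> x" using wN Nb_irrefl[OF sg] by blast
    have h: "lay x < lay w \<or> (lay x = lay w \<and> \<rho>' x \<le> \<rho>' w)" using key_less[OF x wV lt] .
    then have "L \<le> lay w" using lx by auto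
    then have wL: "w \<in> S L" using lay_iff[OF wV] by simp
    have "lay w = L" using lay_le[of w] \<open>L \<le> lay w\<close> by simp
    then have "\<rho> x \<le> \<rho> w" using h lx xL wL unfolding \<rho>'_def by simp
    moreover have "\<rho> x \<noteq> \<rho> w" using g(1) xL wL wx unfolding inj_on_def by blast
    ultimately have "\<rho> x < \<rho> w" by simp
    then show "w \<in> {w\<in>S L. (x, w) \<in> DEs E (S L) \<and> \<rho> x < \<rho> w}" using wL xL wN unfolding DEs_def by simp
  qed
  moreover have "finite {w\<in>S L. (x, w) \<in> DEs E (S L) \<and> \<rho> x < \<rho> w}"
    using fin_sub[OF S_sub[of L]] by simp
  ultimately have "card (outs x) \<le> card {w\<in>S L. (x, w) \<in> DEs E (S L) \<and> \<rho> x < \<rho> w}"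
    by (intro card_mono) auto
  then have "card (outs x) \<le> 2 * a" using g(2) by simp
  then show ?thesis using Tval_ge2a[of a L] a2 by simp
qed

definition lab :: "nat \<Rightarrow> nat \<Rightarrow> nat" where
  "lab v u = (if key v < key u then rnk (outs v) u + 1 else rnk (outs u) v + 1)"
definition par :: "nat \<Rightarrow> nat \<Rightarrow> bool" where "par v u \<longleftrightarrow> key v < key u"

lemma out_view: assumes v: "v \<in> V" and u: "u \<in> Nb E v"
  shows "outf k L (Iv v) (H (L + 6) v) u = (lab v u, par v u)"
proof -
  have uV: "u \<in> V" using u Nb_sub[OF sg] by blast
  have uv: "u \<noteq> v" using u Nb_irrefl[OF sg] by blast
  have kv: "keyK k L (Iv v) (H (L + 6) v) v = key v" and ku: "keyK k L (Iv v) (H (L + 6) v) u = key u"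
    using keyK_view[of "L + 6" v] v uV by auto
  have ov: "outsK k L (Iv v) (H (L + 6) v) = outs v" using outsK_view[of "L + 6" v] v by simp
  show ?thesis
  proof (cases "key v < key u")
    case True
    then show ?thesis unfolding outf_def lab_def par_def using kv ku ov by simp
  next
    case False
    have ne: "key u \<noteq> key v" using key_inj[OF uV v] uv by blast
    then have lt: "key u < key v" using False by simp
    have vo: "v \<in> outs u" unfolding outs_def using lt u Nb_sym by auto
    have "(H (L + 6) v ! (L + 5)) u = msgf k L (Iv u) (H (L + 5) u) v" using H_at uV uv by simp
    also have "\<dots> = raw k L (Iv u) (H (L + 5) u) v"
    proof (rule msgf_eq)
      have "raw k L (Iv u) (H (L + 5) u) v = rnk (outs u) v + 1"
        unfolding raw_def using outsK_view[of "L + 5" u] uV vo by simp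
      moreover have "rnk (outs u) v < card (outs u)" using rnk_less[OF outs_fin vo] .
      moreover have "card (outs u) \<le> card V" using outs_sub Nb_sub[OF sg] by (intro card_mono[OF finV]) blast
      ultimately show "raw k L (Iv u) (H (L + 5) u) v < card V ^ (2 * k + 2)" using n_lt by linarith
    qed
    also have "\<dots> = rnk (outs u) v + 1" unfolding raw_def using outsK_view[of "L + 5" u] uV vo by simp
    finally show ?thesis unfolding outf_def lab_def par_def using kv ku False by simp
  qed
qed

end

context alg begin

lemma edge_info: assumes "{x, y} \<in> E" shows "x \<in> V" "y \<in> V" "y \<in> Nb E x" "x \<in> Nb E y" "x \<noteq> y"
proof -
  show yx: "y \<in> Nb E x" using assms unfolding Nb_def by simp
  then show xy: "x \<in> Nb E y" using Nb_sym by blast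
  show "x \<in> V" using xy Nb_sub[OF sg] by blast
  show "y \<in> V" using yx Nb_sub[OF sg] by blast
  show "x \<noteq> y" using yx Nb_irrefl[OF sg] by blast
qed

lemma lab_sym: assumes "x \<in> V" "y \<in> V" "x \<noteq> y" shows "lab x y = lab y x"
proof -
  have "key x \<noteq> key y" using key_inj assms by blast
  then show ?thesis unfolding lab_def by auto
qed

abbreviation LAB :: "nat \<Rightarrow> nat \<Rightarrow> nat" where "LAB v u \<equiv> fst (outf k L (Iv v) (H (L + 6) v) u)"
abbreviation PAR :: "nat \<Rightarrow> nat \<Rightarrow> bool" where "PAR v u \<equiv> snd (outf k L (Iv v) (H (L + 6) v) u)"

lemma LAB_PAR: assumes "{x, y} \<in> E" shows "LAB x y = lab x y" "PAR x y = par x y"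
  using out_view[OF edge_info(1,3)[OF assms]] by simp_all

lemma Ci_lab: assumes "{x, y} \<in> {e \<in> E. \<exists>u v. e = {u, v} \<and> LAB u v = i}" shows "{x, y} \<in> E" "lab x y = i"
proof -
  show xyE: "{x, y} \<in> E" using assms by simp
  obtain u v where uv: "{x, y} = {u, v}" "LAB u v = i" using assms by blast
  have uvE: "{u, v} \<in> E" using xyE uv(1) by simp
  have "lab u v = i" using LAB_PAR(1)[OF uvE] uv(2) by simp
  moreover have "(x = u \<and> y = v) \<or> (x = v \<and> y = u)" using uv(1) by (simp add: doubleton_eq_iff)
  moreover have "lab v u = lab u v" using lab_sym edge_info[OF uvE] by metis
  ultimately show "lab x y = i" by auto
qed

lemma lab_out: assumes "x \<in> V" "y \<in> Nb E x" "key x < key y" shows "lab x y = rnk (outs x) y + 1" "y \<in> outs x"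
  using assms unfolding lab_def outs_def by auto

lemma no_cycle: assumes c: "is_cycle C vs" and C: "\<And>x y. {x, y} \<in> C \<Longrightarrow> {x, y} \<in> E \<and> lab x y = i"
  shows False
proof -
  let ?n = "length vs"
  have n3: "?n \<ge> 3" and dist: "distinct vs" and ed: "\<forall>j<?n. {vs ! j, vs ! ((j + 1) mod ?n)} \<in> C"
    using c unfolding is_cycle_def by auto
  have inV: "vs ! j \<in> V" if "j < ?n" for j
    using edge_info(1)[of "vs ! j" "vs ! ((j + 1) mod ?n)"] C ed that by blast
  have ne: "set vs \<noteq> {}" using n3 by auto
  let ?K = "key ` set vs"
  have "Min ?K \<in> ?K" using ne by (intro Min_in) auto
  then obtain x where x: "x \<in> set vs" "key x = Min ?K" by auto
  have xmin: "key x \<le> key y" if "y \<in> set vs" for y using x(2) that by simp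
  obtain m where m: "m < ?n" "vs ! m = x" using x(1) by (metis in_set_conv_nth)
  define s where "s = (if m + 1 < ?n then m + 1 else 0)"
  define p where "p = (if m = 0 then ?n - 1 else m - 1)"
  have s_eq: "(m + 1) mod ?n = s"
  proof (cases "m + 1 < ?n")
    case True then show ?thesis unfolding s_def by simp
  next
    case False
    then have "m + 1 = ?n" using m(1) by simp
    then show ?thesis unfolding s_def using False by simp
  qed
  have p_eq: "(p + 1) mod ?n = m" unfolding p_def using m(1) n3 by auto
  have sp: "s < ?n" "p < ?n" "s \<noteq> m" "p \<noteq> m" "s \<noteq> p" unfolding s_def p_def using m(1) n3 by auto
  have e1: "{x, vs ! s} \<in> C" using ed m s_eq by force
  have e0: "{vs ! p, x} \<in> C" using ed sp(2) p_eq m(2) by force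
  have xV: "x \<in> V" using inV m by blast
  have y1: "vs ! s \<noteq> x" using nth_eq_iff_index_eq[OF dist sp(1) m(1)] sp(3) m(2) by simp
  have y0: "vs ! p \<noteq> x" using nth_eq_iff_index_eq[OF dist sp(2) m(1)] sp(4) m(2) by simp
  have y01: "vs ! p \<noteq> vs ! s" using nth_eq_iff_index_eq[OF dist sp(2) sp(1)] sp(5) by simp
  have k1: "key x < key (vs ! s)"
  proof -
    have "key x \<le> key (vs ! s)" using xmin sp(1) by simp
    moreover have "key x \<noteq> key (vs ! s)" using key_inj[OF xV inV[OF sp(1)]] y1 by metis
    ultimately show ?thesis by simp
  qed
  have k0: "key x < key (vs ! p)"
  proof -
    have "key x \<le> key (vs ! p)" using xmin sp(2) by simp
    moreover have "key x \<noteq> key (vs ! p)" using key_inj[OF xV inV[OF sp(2)]] y0 by metis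
    ultimately show ?thesis by simp
  qed
  have E1: "{x, vs ! s} \<in> E" "lab x (vs ! s) = i" using C[OF e1] by auto
  have E0: "{vs ! p, x} \<in> E" "lab (vs ! p) x = i" using C[OF e0] by auto
  have l0: "lab x (vs ! p) = i" using E0 lab_sym[OF inV[OF sp(2)] xV y0] by simp
  have n1: "vs ! s \<in> Nb E x" using edge_info(3)[OF E1(1)] .
  have n0: "vs ! p \<in> Nb E x" using edge_info(4)[OF E0(1)] .
  have r1: "rnk (outs x) (vs ! s) + 1 = i" "vs ! s \<in> outs x" using lab_out[OF xV n1 k1] E1(2) by auto
  have r0: "rnk (outs x) (vs ! p) + 1 = i" "vs ! p \<in> outs x" using lab_out[OF xV n0 k0] l0 by auto
  have "vs ! p = vs ! s" using rnk_inj[OF outs_fin] r1 r0 unfolding inj_on_def by (metis add_right_cancel)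
  then show False using y01 by simp
qed

lemma fdo: "forest_decomposition_output V E LAB PAR (real T)"
  unfolding forest_decomposition_output_def
proof (intro conjI allI impI ballI)
  fix u v assume e: "{u, v} \<in> E"
  have e': "{v, u} \<in> E" using e by (simp add: insert_commute)
  have kn: "key u \<noteq> key v" using key_inj edge_info[OF e] by blast
  have "lab u v = lab v u" using lab_sym edge_info(1,2,5)[OF e] by blast
  then show "LAB u v = LAB v u" using LAB_PAR(1)[OF e] LAB_PAR(1)[OF e'] by simp
  show "PAR u v = (\<not> PAR v u)" using LAB_PAR[OF e] LAB_PAR[OF e'] kn unfolding par_def by auto
next
  fix i
  show "forest {e \<in> E. \<exists>u v. e = {u, v} \<and> LAB u v = i}"
    unfolding forest_def
  proof
    assume "\<exists>vs. is_cycle {e \<in> E. \<exists>u v. e = {u, v} \<and> LAB u v = i} vs"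
    then obtain vs where vs: "is_cycle {e \<in> E. \<exists>u v. e = {u, v} \<and> LAB u v = i} vs" by (elim exE)
    show False
    proof (rule no_cycle[OF vs])
      fix x y assume xy: "{x, y} \<in> {e \<in> E. \<exists>u v. e = {u, v} \<and> LAB u v = i}"
      show "{x, y} \<in> E \<and> lab x y = i" using Ci_lab(1)[OF xy] Ci_lab(2)[OF xy] by (rule conjI)
    qed
  qed
next
  fix v i u w assume v: "v \<in> V" and h: "{v, u} \<in> E \<and> LAB v u = i \<and> PAR v u \<and> {v, w} \<in> E \<and> LAB v w = i \<and> PAR v w"
  have eu: "{v, u} \<in> E" and ew: "{v, w} \<in> E" using h by auto
  have ku: "key v < key u" and kw: "key v < key w" using h LAB_PAR[OF eu] LAB_PAR[OF ew] unfolding par_def by auto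
  have lu: "lab v u = i" and lw: "lab v w = i" using h LAB_PAR[OF eu] LAB_PAR[OF ew] by auto
  have ru: "rnk (outs v) u + 1 = i" "u \<in> outs v" using lab_out[OF v edge_info(3)[OF eu] ku] lu by auto
  have rw: "rnk (outs v) w + 1 = i" "w \<in> outs v" using lab_out[OF v edge_info(3)[OF ew] kw] lw by auto
  show "u = w" using rnk_inj[OF outs_fin] ru rw unfolding inj_on_def by (metis add_right_cancel)
next
  have sub: "{LAB u v | u v. {u, v} \<in> E} \<subseteq> {1..T}"
  proof
    fix l assume "l \<in> {LAB u v | u v. {u, v} \<in> E}"
    then obtain u v where uv: "{u, v} \<in> E" "l = LAB u v" by blast
    have l: "l = lab u v" using uv LAB_PAR by simp
    have uV: "u \<in> V" and vV: "v \<in> V" and vn: "v \<in> Nb E u" and un: "u \<in> Nb E v" using edge_info[OF uv(1)] by auto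
    show "l \<in> {1..T}"
    proof (cases "key u < key v")
      case True
      have "v \<in> outs u" using vn True unfolding outs_def by simp
      then have "rnk (outs u) v < card (outs u)" using rnk_less[OF outs_fin] by blast
      then show ?thesis using l True outs_card[OF uV] unfolding lab_def by simp
    next
      case False
      have "key u \<noteq> key v" using key_inj[OF uV vV] edge_info(5)[OF uv(1)] by blast
      then have "key v < key u" using False by simp
      then have "u \<in> outs v" using un unfolding outs_def by simp
      then have "rnk (outs v) u < card (outs v)" using rnk_less[OF outs_fin] by blast
      then show ?thesis using l False outs_card[OF vV] unfolding lab_def by simp
    qed
  qed
  have "card {LAB u v | u v. {u, v} \<in> E} \<le> card {1..T}" by (rule card_mono[OF _ sub]) simp
  then show "real (card {LAB u v | u v. {u, v} \<in> E}) \<le> real T" by simp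
qed

lemma msgs_ok: "msgs_bounded (msgf k L) V E a R (2 * k + 2)"
  unfolding msgs_bounded_def using msgf_lt by blast

end

lemma fdo_mono: "forest_decomposition_output V E lb pr b \<Longrightarrow> b \<le> b' \<Longrightarrow> forest_decomposition_output V E lb pr b'"
  unfolding forest_decomposition_output_def by (elim conjE) (intro conjI, assumption+, linarith)

theorem mainTheorem9:
  fixes \<epsilon> :: real
  assumes "\<epsilon> > 0"
  shows "\<forall>k::nat. \<exists>(msg :: msg_fun) (out :: out_fun) (C :: real) (R :: nat) (c :: nat).
     \<forall>V E a. simple_graph V E \<and> V \<subseteq> {..< card V ^ k} \<and> arboricity E = a \<and> a \<ge> 2 \<longrightarrow>
       msgs_bounded msg V E a R c \<and>
       forest_decomposition_output V E
         (\<lambda>v u. fst (out (local_inp V E a v) (hist msg (local_inp V E a) V R v) u))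
         (\<lambda>v u. snd (out (local_inp V E a v) (hist msg (local_inp V E a) V R v) u))
         (C * real a powr (1 + \<epsilon>))"
proof
  fix k :: nat
  define L where "L = nat \<lceil>1 / \<epsilon>\<rceil>"
  have L1: "L \<ge> 1"
  proof -
    have p: "0 < 1 / \<epsilon>" using assms by simp
    have "1 / \<epsilon> \<le> real_of_int \<lceil>1 / \<epsilon>\<rceil>" by (rule le_of_int_ceiling)
    then have "0 < real_of_int \<lceil>1 / \<epsilon>\<rceil>" using p by linarith
    then have "0 < \<lceil>1 / \<epsilon>\<rceil>" by simp
    then have "nat 1 \<le> nat \<lceil>1 / \<epsilon>\<rceil>" by (intro nat_mono) linarith
    then show ?thesis unfolding L_def by simp
  qed
  show "\<exists>(msg :: msg_fun) (out :: out_fun) (C :: real) (R :: nat) (c :: nat).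
     \<forall>V E a. simple_graph V E \<and> V \<subseteq> {..< card V ^ k} \<and> arboricity E = a \<and> a \<ge> 2 \<longrightarrow>
       msgs_bounded msg V E a R c \<and>
       forest_decomposition_output V E
         (\<lambda>v u. fst (out (local_inp V E a v) (hist msg (local_inp V E a) V R v) u))
         (\<lambda>v u. snd (out (local_inp V E a v) (hist msg (local_inp V E a) V R v) u))
         (C * real a powr (1 + \<epsilon>))"
  proof (intro exI allI impI)
    fix V E a
    assume h: "simple_graph V E \<and> V \<subseteq> {..< card V ^ k} \<and> arboricity E = a \<and> a \<ge> 2"
    have h1: "simple_graph V E" "V \<subseteq> {..< card V ^ k}" "arboricity E = a" "a \<ge> 2" using h by auto
    interpret alg V E a L k by (rule alg.intro) (use h1 L1 in auto)
    have b: "real T \<le> (2 powr (1 + \<epsilon>) + 1) * real a powr (1 + \<epsilon>)"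
      using Tval_le[OF assms _ L_def] h by simp
    have f: "forest_decomposition_output V E LAB PAR ((2 powr (1 + \<epsilon>) + 1) * real a powr (1 + \<epsilon>))"
      using fdo_mono[OF fdo b] .
    show "msgs_bounded (msgf k L) V E a (L + 6) (2 * k + 2) \<and>
       forest_decomposition_output V E
         (\<lambda>v u. fst (outf k L (local_inp V E a v) (hist (msgf k L) (local_inp V E a) V (L + 6) v) u))
         (\<lambda>v u. snd (outf k L (local_inp V E a v) (hist (msgf k L) (local_inp V E a) V (L + 6) v) u))
         ((2 powr (1 + \<epsilon>) + 1) * real a powr (1 + \<epsilon>))"
      using msgs_ok f by simp
  qed
qed

end
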